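(* Fix $p\in(0,1)$. Let $\Phi_{\mathsf{Even}}=\sum_{v\in\mathsf{Even}}2^{-N_p(v)}$, $\Phi_{\mathsf{Odd}}=\sum_{v\in\mathsf{Odd}}2^{-N_p(v)}$, $\mu_p=\tfrac12(2-p)^d$ and $\sigma_p^2=\tfrac12(\tfrac{4-3p}{2})^d$. Then, as $d\to\infty$, \[ \Big(\frac{\Phi_{\mathsf{Even}}-\mu_p}{\sigma_p},\frac{\Phi_{\mathsf{Odd}}-\mu_p}{\sigma_p}\Big)\xrightarrow{\mathrm d}\mathcal N(0,1)\otimes\mathcal N(0,1), \] i.e. the limit is a pair of independent standard normal random variables.
   Context: Setup: - $Q_d=\{0,1\}^d$ is the hypercube graph. - $\mathsf{Even}$ and $\mathsf{Odd}$ are the vertices of even and odd Hamming weight. - $Q_{d,p}$ is obtained by retaining each edge independently with probability $p$. - $N_p(v)$ is the number of neighbors of $v$ in $Q_{d,p}$. *)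

theory Defs
  imports "HOL-Probability.Probability"
begin

(* Vertices of Q_d: subsets of {..<d} (identified with 0/1 vectors via indicator). *)
definition cube_vertices :: "nat \<Rightarrow> nat set set" where
  "cube_vertices d = Pow {..<d}"

definition cube_edges :: "nat \<Rightarrow> nat set set set" where
  "cube_edges d = {{u, insert i u} | u i. u \<subseteq> {..<d} \<and> i < d \<and> i \<notin> u}"

definition even_vertices :: "nat \<Rightarrow> nat set set" where
  "even_vertices d = {v \<in> cube_vertices d. even (card v)}"

definition odd_vertices :: "nat \<Rightarrow> nat set set" where
  "odd_vertices d = {v \<in> cube_vertices d. odd (card v)}"

(* Q_{d,p}: each edge retained independently with probability p;
   an outcome is the indicator function of retained edges. *)
definition Qdp :: "nat \<Rightarrow> real \<Rightarrow> (nat set set \<Rightarrow> bool) pmf" where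
  "Qdp d p = Pi_pmf (cube_edges d) False (\<lambda>_. bernoulli_pmf p)"

definition Np :: "nat \<Rightarrow> (nat set set \<Rightarrow> bool) \<Rightarrow> nat set \<Rightarrow> nat" where
  "Np d \<omega> v = card {u \<in> cube_vertices d. {u, v} \<in> cube_edges d \<and> \<omega> {u, v}}"

definition Phi :: "nat \<Rightarrow> nat set set \<Rightarrow> (nat set set \<Rightarrow> bool) \<Rightarrow> real" where
  "Phi d S \<omega> = (\<Sum>v\<in>S. (2::real) powi (- int (Np d \<omega> v)))"

definition mu_p :: "real \<Rightarrow> nat \<Rightarrow> real" where
  "mu_p p d = (1/2) * (2 - p) ^ d"

definition sigma_p :: "real \<Rightarrow> nat \<Rightarrow> real" where
  "sigma_p p d = sqrt ((1/2) * ((4 - 3 * p) / 2) ^ d)"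

definition std_normal2 :: "(real \<times> real) measure" where
  "std_normal2 = density lborel std_normal_density \<Otimes>\<^sub>M density lborel std_normal_density"

definition conv_distr2 :: "(nat \<Rightarrow> (real \<times> real) measure) \<Rightarrow> (real \<times> real) measure \<Rightarrow> bool" where
  "conv_distr2 Ms M \<longleftrightarrow>
     (\<forall>f :: real \<times> real \<Rightarrow> real. continuous_on UNIV f \<and> bounded (range f) \<longrightarrow>
        (\<lambda>n. integral\<^sup>L (Ms n) f) \<longlonglongrightarrow> integral\<^sup>L M f)"

end

theory Submission
  imports Defs
begin


definition star :: "nat \<Rightarrow> nat set \<Rightarrow> nat set set set" where
  "star d v = {e \<in> cube_edges d. v \<in> e}"

definition beta :: "bool \<Rightarrow> real" where
  "beta b = (if b then 1/2 else 1)"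

definition xi :: "nat \<Rightarrow> (nat set set \<Rightarrow> bool) \<Rightarrow> nat set \<Rightarrow> real" where
  "xi d \<omega> v = (\<Prod>e\<in>star d v. beta (\<omega> e))"

lemma finite_cube_edges[simp]: "finite (cube_edges d)"
proof -
  have "cube_edges d \<subseteq> Pow (Pow {..<d})"
    unfolding cube_edges_def by auto
  then show ?thesis by (rule finite_subset) auto
qed

lemma finite_star[simp]: "finite (star d v)"
  unfolding star_def by simp

lemma star_sub: "star d v \<subseteq> cube_edges d"
  unfolding star_def by auto

lemma edge_elem:
  assumes "e \<in> cube_edges d"
  obtains w i where "e = {w, insert i w}" "w \<subseteq> {..<d}" "i < d" "i \<notin> w"
  using assms unfolding cube_edges_def by blast

lemma edge_in_vertices:
  assumes "e \<in> cube_edges d" "x \<in> e" shows "x \<in> cube_vertices d"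
  using assms by (auto elim!: edge_elem simp: cube_vertices_def)

lemma edge_two:
  assumes "e \<in> cube_edges d" "x \<in> e"
  obtains y where "e = {x, y}" "x \<noteq> y" "y \<in> cube_vertices d"
proof -
  obtain w i where e: "e = {w, insert i w}" "w \<subseteq> {..<d}" "i < d" "i \<notin> w"
    using assms(1) by (rule edge_elem)
  show ?thesis
  proof (cases "x = w")
    case True
    then show ?thesis using e that[of "insert i w"] by (auto simp: cube_vertices_def)
  next
    case False
    then have "x = insert i w" using assms(2) e by auto
    then show ?thesis using e that[of w] by (auto simp: cube_vertices_def)
  qed
qed

lemma edge_parity:
  assumes "e \<in> cube_edges d"
  obtains u v where "e = {u, v}" "even (card u)" "odd (card v)"
    "u \<in> cube_vertices d" "v \<in> cube_vertices d"
proof -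
  obtain w i where e: "e = {w, insert i w}" "w \<subseteq> {..<d}" "i < d" "i \<notin> w"
    using assms(1) by (rule edge_elem)
  have fw: "finite w" using e(2) finite_subset by blast
  have c: "card (insert i w) = Suc (card w)" using fw e(4) by simp
  have vv: "w \<in> cube_vertices d" "insert i w \<in> cube_vertices d"
    using e by (auto simp: cube_vertices_def)
  show ?thesis
  proof (cases "even (card w)")
    case True
    then show ?thesis using that[of w "insert i w"] e c vv by auto
  next
    case False
    then show ?thesis using that[of "insert i w" w] e c vv by (auto simp: insert_commute)
  qed
qed

lemma edge_not_same_parity:
  assumes "e \<in> cube_edges d" "x \<in> e" "y \<in> e" "x \<noteq> y"
  shows "even (card x) \<longleftrightarrow> odd (card y)"
proof -
  obtain u v where "e = {u, v}" "even (card u)" "odd (card v)"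
    using assms(1) by (rule edge_parity)
  then show ?thesis using assms by auto
qed

lemma Np_star:
  assumes "v \<in> cube_vertices d"
  shows "Np d \<omega> v = card {e \<in> star d v. \<omega> e}"
proof -
  have "bij_betw (\<lambda>u. {u, v}) {u \<in> cube_vertices d. {u, v} \<in> cube_edges d \<and> \<omega> {u, v}}
          {e \<in> star d v. \<omega> e}"
  proof (rule bij_betwI')
    fix x y assume x: "x \<in> {u \<in> cube_vertices d. {u, v} \<in> cube_edges d \<and> \<omega> {u, v}}"
      and y: "y \<in> {u \<in> cube_vertices d. {u, v} \<in> cube_edges d \<and> \<omega> {u, v}}"
    have "x \<noteq> v"
    proof
      assume "x = v"
      with x have "{v} \<in> cube_edges d" by auto
      then show False by (auto elim!: edge_elem simp: doubleton_eq_iff)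
    qed
    moreover have "y \<noteq> v"
    proof
      assume "y = v"
      with y have "{v} \<in> cube_edges d" by auto
      then show False by (auto elim!: edge_elem simp: doubleton_eq_iff)
    qed
    ultimately show "({x, v} = {y, v}) = (x = y)" by (auto simp: doubleton_eq_iff)
  next
    fix x assume "x \<in> {u \<in> cube_vertices d. {u, v} \<in> cube_edges d \<and> \<omega> {u, v}}"
    then show "{x, v} \<in> {e \<in> star d v. \<omega> e}" by (auto simp: star_def)
  next
    fix e assume "e \<in> {e \<in> star d v. \<omega> e}"
    then have e: "e \<in> cube_edges d" "v \<in> e" "\<omega> e" by (auto simp: star_def)
    obtain y where "e = {v, y}" "v \<noteq> y" "y \<in> cube_vertices d"
      using e(1,2) by (rule edge_two)
    then show "\<exists>x\<in>{u \<in> cube_vertices d. {u, v} \<in> cube_edges d \<and> \<omega> {u, v}}. e = {x, v}"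
      using e by (intro bexI[of _ y]) (auto simp: insert_commute)
  qed
  then show ?thesis unfolding Np_def by (rule bij_betw_same_card)
qed

lemma prod_beta_card:
  assumes "finite A"
  shows "(\<Prod>e\<in>A. beta (\<omega> e)) = (1/2) ^ card {e \<in> A. \<omega> e}"
proof -
  have "(\<Prod>e\<in>A. beta (\<omega> e)) = (\<Prod>e\<in>A. if \<omega> e then 1/2 else 1)"
    by (simp add: beta_def)
  also have "\<dots> = (\<Prod>e\<in>{e \<in> A. \<omega> e}. 1/2)"
    using assms by (simp add: prod.If_cases Int_def)
  finally show ?thesis by simp
qed

lemma powi_Np:
  assumes "v \<in> cube_vertices d"
  shows "(2::real) powi (- int (Np d \<omega> v)) = xi d \<omega> v"
  unfolding xi_def prod_beta_card[OF finite_star] Np_star[OF assms]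
  by (simp add: power_int_minus power_one_over inverse_eq_divide)

lemma card_star:
  assumes "v \<in> cube_vertices d"
  shows "card (star d v) = d"
proof -
  define f where "f i = (if i \<in> v then v - {i} else insert i v)" for i
  have vsub: "v \<subseteq> {..<d}" using assms by (simp add: cube_vertices_def)
  have fv: "f i \<noteq> v" for i by (auto simp: f_def)
  have "bij_betw (\<lambda>i. {v, f i}) {..<d} (star d v)"
  proof (rule bij_betwI')
    fix i j assume "i \<in> {..<d}" "j \<in> {..<d}"
    show "({v, f i} = {v, f j}) = (i = j)"
    proof
      assume "{v, f i} = {v, f j}"
      then have "f i = f j" using fv by (auto simp: doubleton_eq_iff)
      then show "i = j" unfolding f_def by (auto split: if_splits)
    qed simp
  next
    fix i assume i: "i \<in> {..<d}"
    show "{v, f i} \<in> star d v"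
    proof (cases "i \<in> v")
      case True
      then have "{v, f i} = {v - {i}, insert i (v - {i})}" by (auto simp: f_def insert_absorb)
      moreover have "v - {i} \<subseteq> {..<d}" using vsub by auto
      ultimately show ?thesis using i by (auto simp: star_def cube_edges_def)
    next
      case False
      then show ?thesis using i vsub by (auto simp: star_def cube_edges_def f_def)
    qed
  next
    fix e assume "e \<in> star d v"
    then have e: "e \<in> cube_edges d" "v \<in> e" by (auto simp: star_def)
    obtain w i where ew: "e = {w, insert i w}" "w \<subseteq> {..<d}" "i < d" "i \<notin> w"
      using e(1) by (rule edge_elem)
    show "\<exists>i\<in>{..<d}. e = {v, f i}"
    proof (cases "v = w")
      case True
      then show ?thesis using ew by (intro bexI[of _ i]) (auto simp: f_def)
    next
      case False
      then have "v = insert i w" using e(2) ew by auto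
      then show ?thesis using ew by (intro bexI[of _ i]) (auto simp: f_def insert_commute)
    qed
  qed
  then show ?thesis using bij_betw_same_card by fastforce
qed

lemma star_disjoint:
  assumes "u \<noteq> u'" "even (card u) \<longleftrightarrow> even (card u')"
  shows "star d u \<inter> star d u' = {}"
proof (rule ccontr)
  assume "star d u \<inter> star d u' \<noteq> {}"
  then obtain e where "e \<in> cube_edges d" "u \<in> e" "u' \<in> e" by (auto simp: star_def)
  then have "even (card u) \<longleftrightarrow> odd (card u')" using assms(1) by (rule edge_not_same_parity)
  then show False using assms(2) by auto
qed

lemma star_even_odd_inter:
  assumes "e \<in> star d u" "e \<in> star d v" "u \<noteq> v"
  shows "star d u \<inter> star d v = {e}"
proof -
  have "e \<in> cube_edges d" "u \<in> e" "v \<in> e" using assms by (auto simp: star_def)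
  obtain y where ey: "e = {u, y}" "u \<noteq> y" using \<open>e \<in> cube_edges d\<close> \<open>u \<in> e\<close> by (rule edge_two)
  then have "e = {u, v}" using \<open>v \<in> e\<close> assms(3) by auto
  moreover have "e' = {u, v}" if "e' \<in> star d u" "e' \<in> star d v" for e'
  proof -
    have "e' \<in> cube_edges d" "u \<in> e'" "v \<in> e'" using that by (auto simp: star_def)
    obtain y where "e' = {u, y}" "u \<noteq> y" using \<open>e' \<in> cube_edges d\<close> \<open>u \<in> e'\<close> by (rule edge_two)
    then show ?thesis using \<open>v \<in> e'\<close> assms(3) by auto
  qed
  ultimately show ?thesis using assms by auto
qed

lemma even_vertices_sub: "even_vertices d \<subseteq> cube_vertices d"
  and odd_vertices_sub: "odd_vertices d \<subseteq> cube_vertices d"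
  by (auto simp: even_vertices_def odd_vertices_def)

lemma finite_cube_vertices[simp]: "finite (cube_vertices d)"
  by (simp add: cube_vertices_def)

lemma finite_even_vertices[simp]: "finite (even_vertices d)"
  and finite_odd_vertices[simp]: "finite (odd_vertices d)"
  by (auto simp: even_vertices_def odd_vertices_def)

lemma edge_even_end:
  assumes "e \<in> cube_edges d"
  obtains u where "u \<in> even_vertices d" "e \<in> star d u"
proof -
  obtain u v where "e = {u, v}" "even (card u)" "odd (card v)" "u \<in> cube_vertices d" "v \<in> cube_vertices d"
    using assms by (rule edge_parity)
  then show ?thesis using that[of u] assms by (auto simp: even_vertices_def star_def)
qed

lemma edge_odd_end:
  assumes "e \<in> cube_edges d"
  obtains v where "v \<in> odd_vertices d" "e \<in> star d v"
proof -
  obtain u v where "e = {u, v}" "even (card u)" "odd (card v)" "u \<in> cube_vertices d" "v \<in> cube_vertices d"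
    using assms by (rule edge_parity)
  then show ?thesis using that[of v] assms by (auto simp: odd_vertices_def star_def)
qed

lemma UN_star_even: "(\<Union>u\<in>even_vertices d. star d u) = cube_edges d"
  using star_sub by (auto elim!: edge_even_end)

lemma UN_star_odd: "(\<Union>u\<in>odd_vertices d. star d u) = cube_edges d"
  using star_sub by (auto elim!: edge_odd_end)

lemma card_edges_even: "card (cube_edges d) = d * card (even_vertices d)"
proof -
  have "card (cube_edges d) = (\<Sum>u\<in>even_vertices d. card (star d u))"
    unfolding UN_star_even[symmetric]
    by (rule card_UN_disjoint) (auto simp: even_vertices_def intro!: star_disjoint)
  also have "\<dots> = (\<Sum>u\<in>even_vertices d. d)"
    using even_vertices_sub by (intro sum.cong refl card_star) auto
  finally show ?thesis by simp
qed

lemma card_edges_odd: "card (cube_edges d) = d * card (odd_vertices d)"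
proof -
  have "card (cube_edges d) = (\<Sum>u\<in>odd_vertices d. card (star d u))"
    unfolding UN_star_odd[symmetric]
    by (rule card_UN_disjoint) (auto simp: odd_vertices_def intro!: star_disjoint)
  also have "\<dots> = (\<Sum>u\<in>odd_vertices d. d)"
    using odd_vertices_sub by (intro sum.cong refl card_star) auto
  finally show ?thesis by simp
qed

lemma card_even_odd:
  assumes "d \<ge> 1"
  shows "card (even_vertices d) = 2 ^ (d - 1)" "card (odd_vertices d) = 2 ^ (d - 1)"
proof -
  have eq: "card (even_vertices d) = card (odd_vertices d)"
    using card_edges_even[of d] card_edges_odd[of d] assms by simp
  have "cube_vertices d = even_vertices d \<union> odd_vertices d"
    by (auto simp: even_vertices_def odd_vertices_def)
  moreover have "even_vertices d \<inter> odd_vertices d = {}"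
    by (auto simp: even_vertices_def odd_vertices_def)
  ultimately have "card (cube_vertices d) = card (even_vertices d) + card (odd_vertices d)"
    by (simp add: card_Un_disjoint)
  moreover have "card (cube_vertices d) = 2 ^ d" by (simp add: cube_vertices_def card_Pow)
  moreover have "(2::nat) ^ d = 2 * 2 ^ (d - 1)" using assms by (cases d) auto
  ultimately show "card (even_vertices d) = 2 ^ (d - 1)" "card (odd_vertices d) = 2 ^ (d - 1)"
    using eq by auto
qed

lemma card_edges:
  assumes "d \<ge> 1" shows "card (cube_edges d) = d * 2 ^ (d - 1)"
  using card_edges_even[of d] card_even_odd[OF assms] by simp


lemma finite_set_pmf_Pi:
  fixes dflt :: "'b::finite"
  assumes "finite A"
  shows "finite (set_pmf (Pi_pmf A dflt P))"
  by (rule finite_subset[OF set_Pi_pmf_subset'[OF assms]]) (use assms in auto)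

lemma finite_set_pmf_finite_type[simp]:
  fixes M :: "'a::finite pmf"
  shows "finite (set_pmf M)"
  by simp

lemma integral_pair_pmf_fin:
  fixes f :: "'a \<times> 'b \<Rightarrow> 'c::{banach, second_countable_topology}"
  assumes A: "finite (set_pmf A)" and B: "finite (set_pmf B)"
  shows "integral\<^sup>L (pair_pmf A B) f = integral\<^sup>L A (\<lambda>a. integral\<^sup>L B (\<lambda>b. f (a, b)))"
proof -
  have "integral\<^sup>L (pair_pmf A B) f = (\<Sum>x\<in>set_pmf A \<times> set_pmf B. pmf (pair_pmf A B) x *\<^sub>R f x)"
    by (rule integral_measure_pmf) (use A B in auto)
  also have "\<dots> = (\<Sum>a\<in>set_pmf A. \<Sum>b\<in>set_pmf B. (pmf A a * pmf B b) *\<^sub>R f (a, b))"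
    unfolding sum.cartesian_product by (intro sum.cong refl) (auto simp: pmf_pair split: prod.splits)
  also have "\<dots> = (\<Sum>a\<in>set_pmf A. pmf A a *\<^sub>R (\<Sum>b\<in>set_pmf B. pmf B b *\<^sub>R f (a, b)))"
    by (simp add: scaleR_sum_right)
  also have "\<dots> = (\<Sum>a\<in>set_pmf A. pmf A a *\<^sub>R integral\<^sup>L B (\<lambda>b. f (a, b)))"
    by (intro sum.cong refl arg_cong2[where f=scaleR] integral_measure_pmf[symmetric]) (use B in auto)
  also have "\<dots> = integral\<^sup>L A (\<lambda>a. integral\<^sup>L B (\<lambda>b. f (a, b)))"
    by (rule integral_measure_pmf[symmetric]) (use A in auto)
  finally show ?thesis .
qed

lemma integral_pair_pmf_mult:
  fixes \<phi> :: "'a \<Rightarrow> 'c::{real_normed_field, banach, second_countable_topology}"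
  assumes A: "finite (set_pmf A)" and B: "finite (set_pmf B)"
  shows "integral\<^sup>L (pair_pmf A B) (\<lambda>(a, b). \<phi> a * \<psi> b) = integral\<^sup>L A \<phi> * integral\<^sup>L B \<psi>"
  by (subst integral_pair_pmf_fin[OF A B]) simp

lemma block_indep:
  fixes f :: "'u \<Rightarrow> ('e \<Rightarrow> bool) \<Rightarrow> 'c::{real_normed_field, banach, second_countable_topology}"
  assumes "finite W" "finite E" "\<And>u. u \<in> W \<Longrightarrow> T u \<subseteq> E"
    and "\<And>u u'. u \<in> W \<Longrightarrow> u' \<in> W \<Longrightarrow> u \<noteq> u' \<Longrightarrow> T u \<inter> T u' = {}"
    and "\<And>u \<omega> \<omega>'. u \<in> W \<Longrightarrow> (\<And>e. e \<in> T u \<Longrightarrow> \<omega> e = \<omega>' e) \<Longrightarrow> f u \<omega> = f u \<omega>'"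
  shows "integral\<^sup>L (Pi_pmf E False P) (\<lambda>\<omega>. \<Prod>u\<in>W. f u \<omega>) =
         (\<Prod>u\<in>W. integral\<^sup>L (Pi_pmf (T u) False P) (f u))"
  using assms
proof (induction W arbitrary: E rule: finite_induct)
  case empty
  then show ?case by simp
next
  case (insert u0 W E)
  have fT: "finite (T u0)" using insert(5)[of u0] insert(4) finite_subset by blast
  have EU: "E = T u0 \<union> (E - T u0)" using insert(5)[of u0] by auto
  define m where "m = (\<lambda>(g1::'e \<Rightarrow> bool) g2 x. if x \<in> T u0 then g1 x else g2 x)"
  have PiE: "Pi_pmf E False P = map_pmf (\<lambda>(g1, g2). m g1 g2) (pair_pmf (Pi_pmf (T u0) False P) (Pi_pmf (E - T u0) False P))"
    unfolding m_def by (subst EU, rule Pi_pmf_union) (use fT insert(4) in auto)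
  have eq: "(\<Prod>u\<in>insert u0 W. f u (m g1 g2)) = f u0 g1 * (\<Prod>u\<in>W. f u g2)" for g1 g2
  proof -
    have "f u0 (m g1 g2) = f u0 g1" by (rule insert(7)) (auto simp: m_def)
    moreover have "f u (m g1 g2) = f u g2" if "u \<in> W" for u
    proof (rule insert(7))
      show "u \<in> insert u0 W" using that by simp
      fix e assume "e \<in> T u"
      moreover have "T u \<inter> T u0 = {}" using insert(6)[of u u0] that insert(2) by auto
      ultimately show "m g1 g2 e = g2 e" by (auto simp: m_def)
    qed
    ultimately show ?thesis using insert(1,2) by simp
  qed
  have "integral\<^sup>L (Pi_pmf E False P) (\<lambda>\<omega>. \<Prod>u\<in>insert u0 W. f u \<omega>) =
        integral\<^sup>L (pair_pmf (Pi_pmf (T u0) False P) (Pi_pmf (E - T u0) False P))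
          (\<lambda>(g1, g2). f u0 g1 * (\<Prod>u\<in>W. f u g2))"
    apply (subst PiE, subst integral_map_pmf)
    apply (rule Bochner_Integration.integral_cong[OF refl])
    subgoal for g by (cases g) (simp only: eq prod.case)
    done
  also have "\<dots> = integral\<^sup>L (Pi_pmf (T u0) False P) (f u0) *
       integral\<^sup>L (Pi_pmf (E - T u0) False P) (\<lambda>g. \<Prod>u\<in>W. f u g)"
    by (rule integral_pair_pmf_mult; rule finite_set_pmf_Pi) (use fT insert(4) in auto)
  also have "integral\<^sup>L (Pi_pmf (E - T u0) False P) (\<lambda>g. \<Prod>u\<in>W. f u g) =
      (\<Prod>u\<in>W. integral\<^sup>L (Pi_pmf (T u) False P) (f u))"
  proof (rule insert(3))
    show "finite (E - T u0)" using insert(4) by simp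
    fix u assume u: "u \<in> W"
    then show "T u \<subseteq> E - T u0" using insert(5)[of u] insert(6)[of u u0] insert(2) by auto
  next
    fix u u' assume "u \<in> W" "u' \<in> W" "u \<noteq> u'"
    then show "T u \<inter> T u' = {}" using insert(6) by auto
  next
    fix u and \<omega> \<omega>' :: "'e \<Rightarrow> bool" assume "u \<in> W" "\<And>e. e \<in> T u \<Longrightarrow> \<omega> e = \<omega>' e"
    then show "f u \<omega> = f u \<omega>'" by (intro insert(7)) auto
  qed
  finally show ?case using insert(1,2) by simp
qed

lemma expectation_prod_beta_pow:
  assumes "finite A" "0 \<le> p" "p \<le> 1"
  shows "measure_pmf.expectation (Pi_pmf A False (\<lambda>_. bernoulli_pmf p)) (\<lambda>\<omega>. \<Prod>e\<in>A. beta (\<omega> e) ^ k)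
     = (p * (1/2)^k + (1 - p)) ^ card A"
proof -
  have "measure_pmf.expectation (Pi_pmf A False (\<lambda>_. bernoulli_pmf p)) (\<lambda>\<omega>. \<Prod>e\<in>A. beta (\<omega> e) ^ k)
     = (\<Prod>e\<in>A. measure_pmf.expectation (bernoulli_pmf p) (\<lambda>v. beta v ^ k))"
    by (rule expectation_prod_Pi_pmf) (use assms in \<open>auto intro!: integrable_measure_pmf_finite simp: beta_def\<close>)
  also have "\<dots> = (\<Prod>e\<in>A. p * (1/2)^k + (1 - p))"
    using assms by (simp add: beta_def power_one_over)
  finally show ?thesis by simp
qed

lemma Pi_pair_split:
  assumes "finite E"
  shows "map_pmf (\<lambda>z. (fst \<circ> z, snd \<circ> z)) (Pi_pmf E (d1, d2) (\<lambda>x. pair_pmf (P x) (Q x)))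
       = pair_pmf (Pi_pmf E d1 P) (Pi_pmf E d2 Q)"
proof (rule pmf_eqI)
  fix y :: "('a \<Rightarrow> 'b) \<times> ('a \<Rightarrow> 'c)"
  obtain f1 f2 where y: "y = (f1, f2)" by (cases y)
  have inj: "inj (\<lambda>z::'a \<Rightarrow> 'b \<times> 'c. (fst \<circ> z, snd \<circ> z))"
    by (rule injI) (auto simp: fun_eq_iff prod_eq_iff)
  have yy: "y = (\<lambda>z. (fst \<circ> z, snd \<circ> z)) (\<lambda>x. (f1 x, f2 x))" by (simp add: y o_def)
  show "pmf (map_pmf (\<lambda>z. (fst \<circ> z, snd \<circ> z)) (Pi_pmf E (d1, d2) (\<lambda>x. pair_pmf (P x) (Q x)))) y =
        pmf (pair_pmf (Pi_pmf E d1 P) (Pi_pmf E d2 Q)) y"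
  proof -
    have "pmf (map_pmf (\<lambda>z. (fst \<circ> z, snd \<circ> z)) (Pi_pmf E (d1, d2) (\<lambda>x. pair_pmf (P x) (Q x)))) y
        = pmf (Pi_pmf E (d1, d2) (\<lambda>x. pair_pmf (P x) (Q x))) (\<lambda>x. (f1 x, f2 x))"
      using pmf_map_inj'[OF inj, of "Pi_pmf E (d1, d2) (\<lambda>x. pair_pmf (P x) (Q x))" "\<lambda>x. (f1 x, f2 x)"] yy
      by simp
    also have "\<dots> = pmf (pair_pmf (Pi_pmf E d1 P) (Pi_pmf E d2 Q)) y"
    proof -
      have *: "pmf (pair_pmf (P x) (Q x)) (f1 x, f2 x) = pmf (P x) (f1 x) * pmf (Q x) (f2 x)" for x
        by (rule pmf_pair)
      show ?thesis
        unfolding y pmf_pair pmf_Pi[OF assms] *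
        by (simp add: prod.distrib) blast
    qed
    finally show ?thesis .
  qed
qed


definition Zp :: "'a set \<Rightarrow> real \<Rightarrow> ('a \<Rightarrow> bool \<times> bool) pmf" where
  "Zp E p = Pi_pmf E (False, False) (\<lambda>_. pair_pmf (bernoulli_pmf p) (bernoulli_pmf p))"

definition hyb :: "'a set \<Rightarrow> ('a \<Rightarrow> bool \<times> bool) \<Rightarrow> 'a \<Rightarrow> bool" where
  "hyb S z = (\<lambda>x. if x \<in> S then snd (z x) else fst (z x))"

definition dF :: "(('a \<Rightarrow> bool) \<Rightarrow> real) \<Rightarrow> ('a \<Rightarrow> bool) \<Rightarrow> 'a \<Rightarrow> real" where
  "dF F w e = F (w(e := True)) - F (w(e := False))"

lemma finite_set_Zp[simp]: "finite E \<Longrightarrow> finite (set_pmf (Zp E p))"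
  unfolding Zp_def by (rule finite_set_pmf_Pi)

lemma integrable_fin[simp]:
  fixes f :: "_ \<Rightarrow> 'c::{banach, second_countable_topology}"
  shows "finite (set_pmf M) \<Longrightarrow> integrable (measure_pmf M) f"
  by (rule integrable_measure_pmf_finite)

lemma integral_pair_pmf_fin':
  fixes f :: "'a \<times> 'b \<Rightarrow> 'c::{banach, second_countable_topology}"
  assumes A: "finite (set_pmf A)" and B: "finite (set_pmf B)"
  shows "integral\<^sup>L (pair_pmf A B) f = integral\<^sup>L B (\<lambda>b. integral\<^sup>L A (\<lambda>a. f (a, b)))"
proof -
  have "integral\<^sup>L (pair_pmf A B) f = integral\<^sup>L (pair_pmf B A) (\<lambda>(b, a). f (a, b))"
    by (subst pair_commute_pmf) (simp add: case_prod_unfold)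
  also have "\<dots> = integral\<^sup>L B (\<lambda>b. integral\<^sup>L A (\<lambda>a. f (a, b)))"
    by (subst integral_pair_pmf_fin[OF B A]) simp
  finally show ?thesis .
qed

lemma bern_pair_calc:
  fixes F G :: "('a \<Rightarrow> bool) \<Rightarrow> real"
  assumes "0 \<le> p" "p \<le> 1"
  shows "integral\<^sup>L (pair_pmf (bernoulli_pmf p) (bernoulli_pmf p))
      (\<lambda>y. F (w(e := fst y)) * (G (h(e := snd y)) - G (h(e := fst y))))
    = - (p * (1 - p)) * dF F w e * dF G h e"
  using assms
  by (subst integral_pair_pmf_fin) (simp_all add: dF_def algebra_simps)

lemma hyb_step:
  fixes F G :: "('a \<Rightarrow> bool) \<Rightarrow> real"
  assumes E: "finite E" and e: "e \<in> E" "e \<notin> S" and p: "0 \<le> p" "p \<le> 1"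
  shows "\<bar>integral\<^sup>L (Zp E p) (\<lambda>z. F (fst \<circ> z) * G (hyb (insert e S) z))
        - integral\<^sup>L (Zp E p) (\<lambda>z. F (fst \<circ> z) * G (hyb S z))\<bar>
     \<le> p * (1 - p) * integral\<^sup>L (Zp E p) (\<lambda>z. \<bar>dF F (fst \<circ> z) e\<bar> * \<bar>dF G (hyb S z) e\<bar>)"
proof -
  define A where "A = E - {e}"
  have EA: "E = insert e A" "e \<notin> A" "finite A" using e E by (auto simp: A_def)
  let ?B = "pair_pmf (bernoulli_pmf p) (bernoulli_pmf p)"
  let ?P = "Pi_pmf A (False, False) (\<lambda>_. ?B)"
  have Z: "Zp E p = map_pmf (\<lambda>(y, g). g(e := y)) (pair_pmf ?B ?P)"
    unfolding Zp_def EA(1) by (rule Pi_pmf_insert[OF EA(3,2)])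
  have finP: "finite (set_pmf ?P)" by (rule finite_set_pmf_Pi[OF EA(3)])
  have h1: "fst \<circ> (g(e := y)) = (fst \<circ> g)(e := fst y)" for g :: "'a \<Rightarrow> bool \<times> bool" and y
    by (auto simp: fun_eq_iff)
  have h2: "hyb (insert e S) (g(e := y)) = (hyb S g)(e := snd y)" for g y
    by (auto simp: fun_eq_iff hyb_def)
  have h3: "hyb S (g(e := y)) = (hyb S g)(e := fst y)" for g y
    using e by (auto simp: fun_eq_iff hyb_def)
  have dFupd: "dF H (w(e := b)) e = dF H w e" for H w b
    by (simp add: dF_def)
  have "integral\<^sup>L (Zp E p) (\<lambda>z. F (fst \<circ> z) * G (hyb (insert e S) z))
        - integral\<^sup>L (Zp E p) (\<lambda>z. F (fst \<circ> z) * G (hyb S z))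
      = integral\<^sup>L (Zp E p) (\<lambda>z. F (fst \<circ> z) * (G (hyb (insert e S) z) - G (hyb S z)))"
    by (subst Bochner_Integration.integral_diff[symmetric]) (simp_all add: E algebra_simps)
  also have "\<dots> = integral\<^sup>L ?P (\<lambda>g. integral\<^sup>L ?B (\<lambda>y.
        F ((fst \<circ> g)(e := fst y)) * (G ((hyb S g)(e := snd y)) - G ((hyb S g)(e := fst y)))))"
    unfolding Z integral_map_pmf
    by (subst integral_pair_pmf_fin'[OF _ finP]) (simp_all add: case_prod_unfold h1 h2 h3)
  also have "\<dots> = integral\<^sup>L ?P (\<lambda>g. - (p * (1 - p)) * dF F (fst \<circ> g) e * dF G (hyb S g) e)"
    by (simp only: bern_pair_calc[OF p])
  finally have L: "integral\<^sup>L (Zp E p) (\<lambda>z. F (fst \<circ> z) * G (hyb (insert e S) z))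
        - integral\<^sup>L (Zp E p) (\<lambda>z. F (fst \<circ> z) * G (hyb S z))
      = integral\<^sup>L ?P (\<lambda>g. - (p * (1 - p)) * dF F (fst \<circ> g) e * dF G (hyb S g) e)" .
  have R: "integral\<^sup>L (Zp E p) (\<lambda>z. \<bar>dF F (fst \<circ> z) e\<bar> * \<bar>dF G (hyb S z) e\<bar>)
      = integral\<^sup>L ?P (\<lambda>g. \<bar>dF F (fst \<circ> g) e\<bar> * \<bar>dF G (hyb S g) e\<bar>)"
    unfolding Z integral_map_pmf
    by (subst integral_pair_pmf_fin'[OF _ finP]) (simp_all add: case_prod_unfold h1 h3 dFupd)
  have "\<bar>integral\<^sup>L ?P (\<lambda>g. - (p * (1 - p)) * dF F (fst \<circ> g) e * dF G (hyb S g) e)\<bar>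
      \<le> integral\<^sup>L ?P (\<lambda>g. \<bar>- (p * (1 - p)) * dF F (fst \<circ> g) e * dF G (hyb S g) e\<bar>)"
    by (rule integral_abs_bound)
  also have "\<dots> = p * (1 - p) * integral\<^sup>L ?P (\<lambda>g. \<bar>dF F (fst \<circ> g) e\<bar> * \<bar>dF G (hyb S g) e\<bar>)"
    using p by (simp add: abs_mult mult.assoc)
  finally show ?thesis unfolding L R .
qed

lemma hyb_telescope:
  fixes F G :: "('a \<Rightarrow> bool) \<Rightarrow> real"
  assumes E: "finite E" and S: "S \<subseteq> E" and p: "0 \<le> p" "p \<le> 1"
    and bound: "\<And>e S'. e \<in> E \<Longrightarrow> S' \<subseteq> E \<Longrightarrow> e \<notin> S' \<Longrightarrow>
      p * (1 - p) * integral\<^sup>L (Zp E p) (\<lambda>z. \<bar>dF F (fst \<circ> z) e\<bar> * \<bar>dF G (hyb S' z) e\<bar>) \<le> B"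
  shows "\<bar>integral\<^sup>L (Zp E p) (\<lambda>z. F (fst \<circ> z) * G (hyb S z))
        - integral\<^sup>L (Zp E p) (\<lambda>z. F (fst \<circ> z) * G (hyb {} z))\<bar> \<le> real (card S) * B"
proof -
  have "finite S" using S E finite_subset by blast
  then show ?thesis using S
  proof (induction S rule: finite_induct)
    case empty
    then show ?case by simp
  next
    case (insert e S)
    have "\<bar>integral\<^sup>L (Zp E p) (\<lambda>z. F (fst \<circ> z) * G (hyb (insert e S) z))
        - integral\<^sup>L (Zp E p) (\<lambda>z. F (fst \<circ> z) * G (hyb S z))\<bar> \<le> B"
      using hyb_step[OF E _ insert(2) p, of F G] bound[of e S] insert(2,4) by auto
    moreover have "\<bar>integral\<^sup>L (Zp E p) (\<lambda>z. F (fst \<circ> z) * G (hyb S z))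
        - integral\<^sup>L (Zp E p) (\<lambda>z. F (fst \<circ> z) * G (hyb {} z))\<bar> \<le> real (card S) * B"
      using insert(3,4) by (simp add: o_def)
    ultimately have "\<bar>integral\<^sup>L (Zp E p) (\<lambda>z. F (fst \<circ> z) * G (hyb (insert e S) z))
        - integral\<^sup>L (Zp E p) (\<lambda>z. F (fst \<circ> z) * G (hyb {} z))\<bar> \<le> B + real (card S) * B"
      by linarith
    then show ?case using insert(1,2) by (simp add: o_def algebra_simps)
  qed
qed

lemma decouple:
  fixes F G :: "('a \<Rightarrow> bool) \<Rightarrow> real"
  assumes E: "finite E" and p: "0 \<le> p" "p \<le> 1"
    and bound: "\<And>e S'. e \<in> E \<Longrightarrow> S' \<subseteq> E \<Longrightarrow> e \<notin> S' \<Longrightarrow>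
      p * (1 - p) * integral\<^sup>L (Zp E p) (\<lambda>z. \<bar>dF F (fst \<circ> z) e\<bar> * \<bar>dF G (hyb S' z) e\<bar>) \<le> B"
  shows "\<bar>integral\<^sup>L (Pi_pmf E False (\<lambda>_. bernoulli_pmf p)) (\<lambda>\<omega>. F \<omega> * G \<omega>)
      - integral\<^sup>L (Pi_pmf E False (\<lambda>_. bernoulli_pmf p)) F *
        integral\<^sup>L (Pi_pmf E False (\<lambda>_. bernoulli_pmf p)) G\<bar> \<le> real (card E) * B"
proof -
  let ?O = "Pi_pmf E False (\<lambda>_. bernoulli_pmf p)"
  have split: "map_pmf (\<lambda>z. (fst \<circ> z, snd \<circ> z)) (Zp E p) = pair_pmf ?O ?O"
    unfolding Zp_def by (rule Pi_pair_split[OF E])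
  have finO: "finite (set_pmf ?O)" by (rule finite_set_pmf_Pi[OF E])
  have "integral\<^sup>L (Zp E p) (\<lambda>z. F (fst \<circ> z) * G (hyb {} z))
      = integral\<^sup>L (map_pmf (\<lambda>z. (fst \<circ> z, snd \<circ> z)) (Zp E p)) (\<lambda>x. F (fst x) * G (fst x))"
    by (simp add: hyb_def o_def)
  also have "\<dots> = integral\<^sup>L ?O (\<lambda>\<omega>. F \<omega> * G \<omega>)"
    unfolding split using expectation_pair_pmf_fst[of ?O ?O "\<lambda>\<omega>. F \<omega> * G \<omega>"] by simp
  finally have J0: "integral\<^sup>L (Zp E p) (\<lambda>z. F (fst \<circ> z) * G (hyb {} z)) = integral\<^sup>L ?O (\<lambda>\<omega>. F \<omega> * G \<omega>)" .
  have sup: "z x = (False, False)" if "z \<in> set_pmf (Zp E p)" "x \<notin> E" for z x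
    using set_Pi_pmf_subset[OF E, of "(False, False)"] that unfolding Zp_def by blast
  have "integral\<^sup>L (Zp E p) (\<lambda>z. F (fst \<circ> z) * G (hyb E z))
      = integral\<^sup>L (Zp E p) (\<lambda>z. F (fst \<circ> z) * G (snd \<circ> z))"
  proof (rule integral_cong_AE)
    show "AE z in measure_pmf (Zp E p). F (fst \<circ> z) * G (hyb E z) = F (fst \<circ> z) * G (snd \<circ> z)"
    proof (rule AE_pmfI)
      fix z assume z: "z \<in> set_pmf (Zp E p)"
      have "hyb E z = snd \<circ> z" using sup[OF z] by (auto simp: hyb_def fun_eq_iff)
      then show "F (fst \<circ> z) * G (hyb E z) = F (fst \<circ> z) * G (snd \<circ> z)" by simp
    qed
  qed simp_all
  also have "\<dots> = integral\<^sup>L (map_pmf (\<lambda>z. (fst \<circ> z, snd \<circ> z)) (Zp E p)) (\<lambda>x. F (fst x) * G (snd x))"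
    by simp
  also have "\<dots> = integral\<^sup>L ?O F * integral\<^sup>L ?O G"
    unfolding split using integral_pair_pmf_mult[OF finO finO, of F G] by (simp add: case_prod_unfold)
  finally have JE: "integral\<^sup>L (Zp E p) (\<lambda>z. F (fst \<circ> z) * G (hyb E z)) = integral\<^sup>L ?O F * integral\<^sup>L ?O G" .
  show ?thesis
    using hyb_telescope[OF E order_refl p bound] unfolding J0 JE by (simp add: abs_minus_commute)
qed


definition XW :: "nat \<Rightarrow> real \<Rightarrow> nat set set \<Rightarrow> (nat set set \<Rightarrow> bool) \<Rightarrow> real" where
  "XW d p W \<omega> = ((\<Sum>u\<in>W. xi d \<omega> u) - mu_p p d) / sigma_p p d"

definition gam :: "nat \<Rightarrow> nat set \<Rightarrow> nat set set \<Rightarrow> (nat set set \<Rightarrow> bool) \<Rightarrow> real" where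
  "gam d u e w = (\<Prod>e'\<in>star d u - {e}. beta (w e'))"

definition samepar :: "nat set set \<Rightarrow> bool" where
  "samepar W \<longleftrightarrow> (\<forall>u\<in>W. \<forall>u'\<in>W. even (card u) = even (card u'))"

lemma samepar_even: "samepar (even_vertices d)" and samepar_odd: "samepar (odd_vertices d)"
  by (auto simp: samepar_def even_vertices_def odd_vertices_def)

lemma beta_nonneg: "0 \<le> beta b" and beta_le1: "beta b \<le> 1"
  by (auto simp: beta_def)

lemma gam_nonneg: "0 \<le> gam d u e w"
  unfolding gam_def by (intro prod_nonneg) (auto simp: beta_nonneg)

lemma xi_nonneg: "0 \<le> xi d w u" and xi_le1: "xi d w u \<le> 1"
  unfolding xi_def by (auto intro!: prod_nonneg prod_le_1 simp: beta_nonneg beta_le1)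

lemma xi_upd_in:
  assumes "e \<in> star d u"
  shows "xi d (w(e := b)) u = beta b * gam d u e w"
proof -
  have "xi d (w(e := b)) u = beta ((w(e := b)) e) * (\<Prod>e'\<in>star d u - {e}. beta ((w(e := b)) e'))"
    unfolding xi_def by (rule prod.remove[OF finite_star assms])
  also have "(\<Prod>e'\<in>star d u - {e}. beta ((w(e := b)) e')) = gam d u e w"
    unfolding gam_def by (intro prod.cong) auto
  finally show ?thesis by (simp add: fun_upd_def)
qed

lemma xi_upd_out:
  assumes "e \<notin> star d u"
  shows "xi d (w(e := b)) u = xi d w u"
  unfolding xi_def
proof (rule prod.cong[OF refl])
  fix x assume "x \<in> star d u"
  then have "x \<noteq> e" using assms by auto
  then show "beta ((w(e := b)) x) = beta (w x)" by simp
qed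

lemma sum_xi_upd:
  assumes "finite W" "u \<in> W" "e \<in> star d u" "samepar W"
  shows "(\<Sum>u'\<in>W. xi d (w(e := b)) u') = beta b * gam d u e w + (\<Sum>u'\<in>W - {u}. xi d w u')"
proof -
  have "(\<Sum>u'\<in>W. xi d (w(e := b)) u') = xi d (w(e := b)) u + (\<Sum>u'\<in>W - {u}. xi d (w(e := b)) u')"
    by (rule sum.remove[OF assms(1,2)])
  also have "(\<Sum>u'\<in>W - {u}. xi d (w(e := b)) u') = (\<Sum>u'\<in>W - {u}. xi d w u')"
  proof (rule sum.cong[OF refl], rule xi_upd_out)
    fix u' assume u': "u' \<in> W - {u}"
    have "star d u \<inter> star d u' = {}"
    proof (rule star_disjoint)
      show "u \<noteq> u'" using u' by auto
      show "even (card u) \<longleftrightarrow> even (card u')"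
        using assms(4) assms(2) u' unfolding samepar_def by blast
    qed
    then show "e \<notin> star d u'" using assms(3) by auto
  qed
  finally show ?thesis by (simp only: xi_upd_in[OF assms(3)])
qed

lemma dF_XW:
  assumes "finite W" "u \<in> W" "e \<in> star d u" "samepar W" "sigma_p p d > 0"
    and L: "\<And>x y. \<bar>g x - g y\<bar> \<le> L * \<bar>x - y\<bar>"
  shows "\<bar>dF (\<lambda>\<omega>. g (XW d p W \<omega>)) w e\<bar> \<le> L * gam d u e w / (2 * sigma_p p d)"
proof -
  let ?s = "sigma_p p d"
  have "XW d p W (w(e := True)) - XW d p W (w(e := False)) = (beta True - beta False) * gam d u e w / ?s"
    unfolding XW_def sum_xi_upd[OF assms(1-4)] by (simp add: diff_divide_distrib[symmetric] left_diff_distrib)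
  also have "\<dots> = - (gam d u e w / (2 * ?s))" by (simp add: beta_def)
  finally have "\<bar>XW d p W (w(e := True)) - XW d p W (w(e := False))\<bar> = gam d u e w / (2 * ?s)"
    using gam_nonneg[of d u e w] assms(5) by simp
  then show ?thesis unfolding dF_def using L[of "XW d p W (w(e := True))" "XW d p W (w(e := False))"]
    by (simp add: mult.assoc)
qed

lemma exp_gam_pair:
  assumes E: "finite E" and AB: "A \<subseteq> E" "B \<subseteq> E" "A \<inter> B = {}" and p: "0 \<le> p" "p \<le> 1"
  shows "integral\<^sup>L (Zp E p) (\<lambda>z. (\<Prod>e'\<in>A. beta (fst (z e'))) * (\<Prod>e'\<in>B. beta (hyb S z e')))
    = (1 - p/2) ^ (card A + card B)"
proof -
  define \<phi> where "\<phi> e' y = (if e' \<in> A then beta (fst y) else if e' \<in> B then beta (if e' \<in> S then snd y else fst y) else 1)"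
    for e' and y :: "bool \<times> bool"
  have fA: "finite A" "finite B" using AB(1,2) E by (auto intro: finite_subset)
  have eq: "(\<Prod>e'\<in>A. beta (fst (z e'))) * (\<Prod>e'\<in>B. beta (hyb S z e')) = (\<Prod>e'\<in>E. \<phi> e' (z e'))" for z
  proof -
    have "(\<Prod>e'\<in>E. \<phi> e' (z e')) = (\<Prod>e'\<in>A \<union> B. \<phi> e' (z e'))"
      using AB E by (intro prod.mono_neutral_right) (auto simp: \<phi>_def)
    also have "\<dots> = (\<Prod>e'\<in>A. \<phi> e' (z e')) * (\<Prod>e'\<in>B. \<phi> e' (z e'))"
      using fA AB by (intro prod.union_disjoint) auto
    also have "(\<Prod>e'\<in>A. \<phi> e' (z e')) = (\<Prod>e'\<in>A. beta (fst (z e')))"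
      by (intro prod.cong) (auto simp: \<phi>_def)
    also have "(\<Prod>e'\<in>B. \<phi> e' (z e')) = (\<Prod>e'\<in>B. beta (hyb S z e'))"
      using AB by (intro prod.cong) (auto simp: \<phi>_def hyb_def)
    finally show ?thesis by simp
  qed
  have ex: "measure_pmf.expectation (pair_pmf (bernoulli_pmf p) (bernoulli_pmf p)) (\<phi> e')
      = (if e' \<in> A \<or> e' \<in> B then 1 - p/2 else 1)" for e'
  proof -
    have 0: "measure_pmf.expectation (bernoulli_pmf p) beta = 1 - p/2" using p by (simp add: beta_def)
    have 1: "measure_pmf.expectation (pair_pmf (bernoulli_pmf p) (bernoulli_pmf p)) (\<lambda>y. beta (fst y)) = 1 - p/2"
      using expectation_pair_pmf_fst[of "bernoulli_pmf p" "bernoulli_pmf p" beta] p by (simp add: beta_def)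
    have 2: "measure_pmf.expectation (pair_pmf (bernoulli_pmf p) (bernoulli_pmf p)) (\<lambda>y. beta (snd y)) = 1 - p/2"
      using expectation_pair_pmf_snd[of "bernoulli_pmf p" "bernoulli_pmf p" beta] p by (simp add: beta_def)
    show ?thesis
      by (cases "e' \<in> A"; cases "e' \<in> B"; cases "e' \<in> S") (simp_all add: \<phi>_def[abs_def] 0)
  qed
  have "integral\<^sup>L (Zp E p) (\<lambda>z. (\<Prod>e'\<in>A. beta (fst (z e'))) * (\<Prod>e'\<in>B. beta (hyb S z e')))
      = integral\<^sup>L (Zp E p) (\<lambda>z. \<Prod>e'\<in>E. \<phi> e' (z e'))"
    by (simp only: eq)
  also have "\<dots> = (\<Prod>e'\<in>E. measure_pmf.expectation (pair_pmf (bernoulli_pmf p) (bernoulli_pmf p)) (\<phi> e'))"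
    unfolding Zp_def
    by (rule expectation_prod_Pi_pmf[OF E]) (auto simp: \<phi>_def beta_nonneg intro!: integrable_measure_pmf_finite)
  also have "\<dots> = (\<Prod>e'\<in>E. if e' \<in> A \<union> B then 1 - p/2 else 1)"
    by (intro prod.cong refl) (simp add: ex)
  also have "\<dots> = (1 - p/2) ^ card (A \<union> B)"
  proof -
    have "E \<inter> {x. x \<in> A \<union> B} = A \<union> B" using AB by blast
    then show ?thesis by (simp add: prod.If_cases[OF E])
  qed
  also have "card (A \<union> B) = card A + card B"
    using fA AB by (simp add: card_Un_disjoint)
  finally show ?thesis .
qed

lemma card_star_minus:
  assumes "v \<in> cube_vertices d" "e \<in> star d v"
  shows "card (star d v - {e}) = d - 1"
  using assms card_star[OF assms(1)] by simp

lemma decouple_XY: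
  assumes p: "0 \<le> p" "p \<le> 1" and s: "sigma_p p d > 0"
    and Lg: "\<And>x y. \<bar>g x - g y\<bar> \<le> L1 * \<bar>x - y\<bar>" and L1: "L1 \<ge> 0"
    and Lh: "\<And>x y. \<bar>h x - h y\<bar> \<le> L2 * \<bar>x - y\<bar>" and L2: "L2 \<ge> 0"
  shows "\<bar>measure_pmf.expectation (Qdp d p) (\<lambda>\<omega>. g (XW d p (even_vertices d) \<omega>) * h (XW d p (odd_vertices d) \<omega>))
      - measure_pmf.expectation (Qdp d p) (\<lambda>\<omega>. g (XW d p (even_vertices d) \<omega>)) *
        measure_pmf.expectation (Qdp d p) (\<lambda>\<omega>. h (XW d p (odd_vertices d) \<omega>))\<bar>
    \<le> real (card (cube_edges d)) * (p * (1 - p) * (L1 * L2 / (4 * (sigma_p p d)^2) * (1 - p/2) ^ (2 * (d - 1))))"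
  unfolding Qdp_def
proof (rule decouple[OF finite_cube_edges p])
  let ?s = "sigma_p p d"
  fix e S' assume e: "e \<in> cube_edges d" and S': "S' \<subseteq> cube_edges d" "e \<notin> S'"
  obtain u where u: "u \<in> even_vertices d" "e \<in> star d u" using e by (rule edge_even_end)
  obtain v where v: "v \<in> odd_vertices d" "e \<in> star d v" using e by (rule edge_odd_end)
  have uv: "u \<noteq> v" using u v by (auto simp: even_vertices_def odd_vertices_def)
  have inter: "star d u \<inter> star d v = {e}" by (rule star_even_odd_inter[OF u(2) v(2) uv])
  have uV: "u \<in> cube_vertices d" and vV: "v \<in> cube_vertices d"
    using u v even_vertices_sub odd_vertices_sub by auto
  have bnd: "\<bar>dF (\<lambda>\<omega>. g (XW d p (even_vertices d) \<omega>)) (fst \<circ> z) e\<bar> * \<bar>dF (\<lambda>\<omega>. h (XW d p (odd_vertices d) \<omega>)) (hyb S' z) e\<bar>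
      \<le> L1 * L2 / (4 * ?s^2) * (gam d u e (fst \<circ> z) * gam d v e (hyb S' z))" for z
  proof -
    have 1: "\<bar>dF (\<lambda>\<omega>. g (XW d p (even_vertices d) \<omega>)) (fst \<circ> z) e\<bar> \<le> L1 * gam d u e (fst \<circ> z) / (2 * ?s)"
      by (rule dF_XW[OF finite_even_vertices u(1) u(2) samepar_even s Lg])
    have 2: "\<bar>dF (\<lambda>\<omega>. h (XW d p (odd_vertices d) \<omega>)) (hyb S' z) e\<bar> \<le> L2 * gam d v e (hyb S' z) / (2 * ?s)"
      by (rule dF_XW[OF finite_odd_vertices v(1) v(2) samepar_odd s Lh])
    have "\<bar>dF (\<lambda>\<omega>. g (XW d p (even_vertices d) \<omega>)) (fst \<circ> z) e\<bar> * \<bar>dF (\<lambda>\<omega>. h (XW d p (odd_vertices d) \<omega>)) (hyb S' z) e\<bar>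
      \<le> (L1 * gam d u e (fst \<circ> z) / (2 * ?s)) * (L2 * gam d v e (hyb S' z) / (2 * ?s))"
    proof (rule mult_mono[OF 1 2])
      show "0 \<le> L1 * gam d u e (fst \<circ> z) / (2 * ?s)"
        using L1 gam_nonneg[of d u e "fst \<circ> z"] s by simp
    qed simp
    also have "\<dots> = L1 * L2 / (4 * ?s^2) * (gam d u e (fst \<circ> z) * gam d v e (hyb S' z))"
      by (simp add: power2_eq_square field_simps)
    finally show ?thesis .
  qed
  have "integral\<^sup>L (Zp (cube_edges d) p) (\<lambda>z. \<bar>dF (\<lambda>\<omega>. g (XW d p (even_vertices d) \<omega>)) (fst \<circ> z) e\<bar> *
          \<bar>dF (\<lambda>\<omega>. h (XW d p (odd_vertices d) \<omega>)) (hyb S' z) e\<bar>)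
      \<le> integral\<^sup>L (Zp (cube_edges d) p) (\<lambda>z. L1 * L2 / (4 * ?s^2) * (gam d u e (fst \<circ> z) * gam d v e (hyb S' z)))"
    by (intro integral_mono bnd) simp_all
  also have "\<dots> = L1 * L2 / (4 * ?s^2) * integral\<^sup>L (Zp (cube_edges d) p) (\<lambda>z. gam d u e (fst \<circ> z) * gam d v e (hyb S' z))"
    by simp
  also have "integral\<^sup>L (Zp (cube_edges d) p) (\<lambda>z. gam d u e (fst \<circ> z) * gam d v e (hyb S' z))
      = (1 - p/2) ^ (card (star d u - {e}) + card (star d v - {e}))"
    unfolding gam_def o_def
    by (rule exp_gam_pair[OF finite_cube_edges _ _ _ p]) (use star_sub[of d u] star_sub[of d v] inter in blast)+
  also have "card (star d u - {e}) + card (star d v - {e}) = 2 * (d - 1)"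
    using card_star_minus[OF uV u(2)] card_star_minus[OF vV v(2)] by simp
  finally have "integral\<^sup>L (Zp (cube_edges d) p) (\<lambda>z. \<bar>dF (\<lambda>\<omega>. g (XW d p (even_vertices d) \<omega>)) (fst \<circ> z) e\<bar> *
          \<bar>dF (\<lambda>\<omega>. h (XW d p (odd_vertices d) \<omega>)) (hyb S' z) e\<bar>)
      \<le> L1 * L2 / (4 * ?s^2) * (1 - p/2) ^ (2 * (d - 1))" .
  then show "p * (1 - p) * integral\<^sup>L (Zp (cube_edges d) p) (\<lambda>z. \<bar>dF (\<lambda>\<omega>. g (XW d p (even_vertices d) \<omega>)) (fst \<circ> z) e\<bar> *
          \<bar>dF (\<lambda>\<omega>. h (XW d p (odd_vertices d) \<omega>)) (hyb S' z) e\<bar>)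
      \<le> p * (1 - p) * (L1 * L2 / (4 * ?s^2) * (1 - p/2) ^ (2 * (d - 1)))"
    using p by (intro mult_left_mono) auto
qed


lemma mu_p_eq:
  assumes "d \<ge> 1"
  shows "mu_p p d = 2 ^ (d - 1) * (1 - p/2) ^ d"
proof -
  have "(2 - p) ^ d = (2 * (1 - p/2)) ^ d" by simp
  also have "\<dots> = 2 ^ d * (1 - p/2) ^ d" by (rule power_mult_distrib)
  also have "(2::real) ^ d = 2 * 2 ^ (d - 1)" using assms by (cases d) auto
  finally show ?thesis unfolding mu_p_def by simp
qed

lemma sigma_sq_eq:
  assumes "d \<ge> 1" "p \<le> 1"
  shows "(sigma_p p d)^2 = 2 ^ (d - 1) * (1 - 3*p/4) ^ d"
proof -
  have nn: "0 \<le> (1/2) * ((4 - 3 * p) / 2) ^ d" using assms by simp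
  have "(4 - 3 * p) / 2 = 2 * (1 - 3*p/4)" by (simp add: field_simps)
  then have "((4 - 3 * p) / 2) ^ d = (2 * (1 - 3*p/4)) ^ d" by (simp only:)
  also have "\<dots> = 2 ^ d * (1 - 3*p/4) ^ d" by (rule power_mult_distrib)
  also have "(2::real) ^ d = 2 * 2 ^ (d - 1)" using assms by (cases d) auto
  finally show ?thesis unfolding sigma_p_def using nn by simp
qed

lemma sigma_pos:
  assumes "p < 1"
  shows "sigma_p p d > 0"
  unfolding sigma_p_def using assms by simp

lemma XW_sum:
  assumes "d \<ge> 1" "card W = 2 ^ (d - 1)"
  shows "t * XW d p W \<omega> = (\<Sum>u\<in>W. t / sigma_p p d * (xi d \<omega> u - (1 - p/2) ^ d))"
proof -
  have mu: "mu_p p d = (\<Sum>u\<in>W. (1 - p/2) ^ d)" using mu_p_eq[OF assms(1)] assms(2) by simp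
  have 1: "(\<Sum>u\<in>W. xi d \<omega> u) - mu_p p d = (\<Sum>u\<in>W. xi d \<omega> u - (1-p/2)^d)"
    unfolding mu by (rule sum_subtractf[symmetric])
  have "t * XW d p W \<omega> = t / sigma_p p d * (\<Sum>u\<in>W. xi d \<omega> u - (1-p/2)^d)"
    unfolding XW_def 1 by simp
  also have "\<dots> = (\<Sum>u\<in>W. t / sigma_p p d * (xi d \<omega> u - (1 - p/2) ^ d))"
    by (rule sum_distrib_left)
  finally show ?thesis .
qed

lemma char_prod:
  assumes d: "d \<ge> 1" and W: "samepar W" "W \<subseteq> cube_vertices d" "card W = 2 ^ (d - 1)"
  shows "measure_pmf.expectation (Qdp d p) (\<lambda>\<omega>. iexp (t * XW d p W \<omega>))
    = (\<Prod>u\<in>W. measure_pmf.expectation (Pi_pmf (star d u) False (\<lambda>_. bernoulli_pmf p))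
          (\<lambda>\<omega>. iexp (t / sigma_p p d * (xi d \<omega> u - (1 - p/2) ^ d))))"
proof -
  have fW: "finite W" by (rule finite_subset[OF W(2)]) simp
  have h: "iexp (t * XW d p W \<omega>) = (\<Prod>u\<in>W. iexp (t / sigma_p p d * (xi d \<omega> u - (1 - p/2) ^ d)))" for \<omega>
    unfolding XW_sum[OF d W(3)] by (simp only: of_real_sum sum_distrib_left exp_sum[OF fW])
  have "measure_pmf.expectation (Qdp d p) (\<lambda>\<omega>. iexp (t * XW d p W \<omega>))
    = measure_pmf.expectation (Qdp d p) (\<lambda>\<omega>. \<Prod>u\<in>W. iexp (t / sigma_p p d * (xi d \<omega> u - (1 - p/2) ^ d)))"
    by (simp only: h)
  also have "\<dots> = (\<Prod>u\<in>W. measure_pmf.expectation (Pi_pmf (star d u) False (\<lambda>_. bernoulli_pmf p))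
          (\<lambda>\<omega>. iexp (t / sigma_p p d * (xi d \<omega> u - (1 - p/2) ^ d))))"
    unfolding Qdp_def
  proof (rule block_indep[OF fW finite_cube_edges, where T = "star d" and P = "\<lambda>_. bernoulli_pmf p" and
        f = "\<lambda>u \<omega>. iexp (t / sigma_p p d * (xi d \<omega> u - (1 - p/2) ^ d))"])
    show "\<And>u. u \<in> W \<Longrightarrow> star d u \<subseteq> cube_edges d" by (rule star_sub)
  next
    fix u u' assume "u \<in> W" "u' \<in> W" "u \<noteq> u'"
    show "star d u \<inter> star d u' = {}"
    proof (rule star_disjoint)
      show "even (card u) \<longleftrightarrow> even (card u')" using W(1) \<open>u \<in> W\<close> \<open>u' \<in> W\<close> unfolding samepar_def by blast
    qed fact
  next
    fix u and \<omega> \<omega>' :: "nat set set \<Rightarrow> bool"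
    assume "\<And>e. e \<in> star d u \<Longrightarrow> \<omega> e = \<omega>' e"
    then have "xi d \<omega> u = xi d \<omega>' u" unfolding xi_def by (intro prod.cong refl) simp
    then show "iexp (t / sigma_p p d * (xi d \<omega> u - (1 - p / 2) ^ d)) =
               iexp (t / sigma_p p d * (xi d \<omega>' u - (1 - p / 2) ^ d))" by simp
  qed
  finally show ?thesis .
qed

lemma xi_moments:
  assumes u: "u \<in> cube_vertices d" and p: "0 \<le> p" "p \<le> 1"
  shows "measure_pmf.expectation (Pi_pmf (star d u) False (\<lambda>_. bernoulli_pmf p)) (\<lambda>\<omega>. xi d \<omega> u ^ k)
    = (p * (1/2)^k + (1 - p)) ^ d"
  unfolding xi_def prod_power_distrib expectation_prod_beta_pow[OF finite_star p] card_star[OF u] ..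

lemma iexp_taylor2:
  "cmod (iexp x - (complex_of_real (1 - x^2/2) + \<i> * complex_of_real x)) \<le> \<bar>x\<bar>^3 / 6"
proof -
  have "(\<Sum>k\<le>2. (\<i> * complex_of_real x) ^ k / fact k) = complex_of_real (1 - x^2/2) + \<i> * complex_of_real x"
    by (simp add: numeral_2_eq_2 complex_eq_iff power2_eq_square)
  moreover have "fact (Suc 2) = (6::real)" by (simp add: numeral_3_eq_3 numeral_2_eq_2)
  ultimately show ?thesis using iexp_approx1[of x 2] by (simp add: numeral_3_eq_3)
qed

lemma factor_bound:
  assumes u: "u \<in> cube_vertices d" and p: "0 \<le> p" "p \<le> 1"
  shows "cmod (measure_pmf.expectation (Pi_pmf (star d u) False (\<lambda>_. bernoulli_pmf p))
            (\<lambda>\<omega>. iexp (\<theta> * (xi d \<omega> u - (1 - p/2)^d)))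
          - complex_of_real (1 - \<theta>^2 * ((1 - 3*p/4)^d - ((1 - p/2)^d)^2) / 2))
     \<le> \<bar>\<theta>\<bar>^3 * ((1 - 7*p/8)^d + ((1 - p/2)^d)^3) / 6"
proof -
  let ?P = "Pi_pmf (star d u) False (\<lambda>_. bernoulli_pmf p)"
  define m where "m = (1 - p/2)^d"
  define Y where "Y \<omega> = xi d \<omega> u - m" for \<omega>
  have fin: "finite (set_pmf ?P)" by (rule finite_set_pmf_Pi) simp
  have M1: "measure_pmf.expectation ?P (\<lambda>\<omega>. xi d \<omega> u) = m"
    using xi_moments[OF u p, of 1] by (simp add: m_def)
  have M2: "measure_pmf.expectation ?P (\<lambda>\<omega>. xi d \<omega> u ^ 2) = (1 - 3*p/4)^d"
    using xi_moments[OF u p, of 2] by (simp add: power2_eq_square)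
  have M3: "measure_pmf.expectation ?P (\<lambda>\<omega>. xi d \<omega> u ^ 3) = (1 - 7*p/8)^d"
    using xi_moments[OF u p, of 3] by (simp add: power3_eq_cube)
  have EY: "measure_pmf.expectation ?P Y = 0"
    unfolding Y_def using fin by (simp add: M1 Bochner_Integration.integral_diff)
  have "measure_pmf.expectation ?P (\<lambda>\<omega>. (Y \<omega>)^2)
      = measure_pmf.expectation ?P (\<lambda>\<omega>. xi d \<omega> u ^ 2 - 2 * m * xi d \<omega> u + m^2)"
    unfolding Y_def by (simp add: power2_eq_square algebra_simps)
  also have "\<dots> = (1 - 3*p/4)^d - m^2"
    using fin by (simp add: Bochner_Integration.integral_diff Bochner_Integration.integral_add M1 M2 power2_eq_square[of m])
  finally have EY2: "measure_pmf.expectation ?P (\<lambda>\<omega>. (Y \<omega>)^2) = (1 - 3*p/4)^d - m^2" .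
  have Y3: "\<bar>Y \<omega>\<bar>^3 \<le> xi d \<omega> u ^ 3 + m^3" for \<omega>
  proof -
    have x0: "0 \<le> xi d \<omega> u" by (rule xi_nonneg)
    have m0: "0 \<le> m" using p by (simp add: m_def)
    have "\<bar>Y \<omega>\<bar> \<le> max (xi d \<omega> u) m" using x0 m0 by (simp add: Y_def)
    then have "\<bar>Y \<omega>\<bar>^3 \<le> (max (xi d \<omega> u) m)^3" by (intro power_mono) auto
    also have "\<dots> \<le> xi d \<omega> u ^ 3 + m^3" using x0 m0 by (auto simp: max_def)
    finally show ?thesis .
  qed
  define poly where "poly \<omega> = complex_of_real (1 - (\<theta> * Y \<omega>)^2/2) + \<i> * complex_of_real (\<theta> * Y \<omega>)" for \<omega>
  have Epoly: "measure_pmf.expectation ?P poly = complex_of_real (1 - \<theta>^2 * ((1 - 3*p/4)^d - m^2) / 2)"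
  proof -
    have "measure_pmf.expectation ?P poly
        = complex_of_real (measure_pmf.expectation ?P (\<lambda>\<omega>. 1 - (\<theta> * Y \<omega>)^2/2))
          + \<i> * complex_of_real (measure_pmf.expectation ?P (\<lambda>\<omega>. \<theta> * Y \<omega>))"
    proof -
      have "measure_pmf.expectation ?P poly
        = measure_pmf.expectation ?P (\<lambda>\<omega>. complex_of_real (1 - (\<theta> * Y \<omega>)^2/2))
          + measure_pmf.expectation ?P (\<lambda>\<omega>. \<i> * complex_of_real (\<theta> * Y \<omega>))"
        unfolding poly_def by (rule Bochner_Integration.integral_add) (use fin in simp_all)
      then show ?thesis by (simp only: integral_complex_of_real integral_mult_right_zero)
    qed
    also have "measure_pmf.expectation ?P (\<lambda>\<omega>. \<theta> * Y \<omega>) = 0" using EY by simp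
    also have "measure_pmf.expectation ?P (\<lambda>\<omega>. 1 - (\<theta> * Y \<omega>)^2/2) = 1 - \<theta>^2 * ((1 - 3*p/4)^d - m^2) / 2"
      using fin by (simp add: Bochner_Integration.integral_diff power_mult_distrib EY2)
    finally show ?thesis by simp
  qed
  have "cmod (measure_pmf.expectation ?P (\<lambda>\<omega>. iexp (\<theta> * Y \<omega>)) - measure_pmf.expectation ?P poly)
      = cmod (measure_pmf.expectation ?P (\<lambda>\<omega>. iexp (\<theta> * Y \<omega>) - poly \<omega>))"
    using fin by (simp add: Bochner_Integration.integral_diff)
  also have "\<dots> \<le> measure_pmf.expectation ?P (\<lambda>\<omega>. cmod (iexp (\<theta> * Y \<omega>) - poly \<omega>))"
    by (rule integral_norm_bound)
  also have "\<dots> \<le> measure_pmf.expectation ?P (\<lambda>\<omega>. \<bar>\<theta>\<bar>^3 * (xi d \<omega> u ^ 3 + m^3) / 6)"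
  proof (rule integral_mono)
    fix \<omega>
    have "cmod (iexp (\<theta> * Y \<omega>) - poly \<omega>) \<le> \<bar>\<theta> * Y \<omega>\<bar>^3 / 6"
      unfolding poly_def by (rule iexp_taylor2)
    also have "\<dots> = \<bar>\<theta>\<bar>^3 * \<bar>Y \<omega>\<bar>^3 / 6" by (simp add: abs_mult power_mult_distrib)
    also have "\<dots> \<le> \<bar>\<theta>\<bar>^3 * (xi d \<omega> u ^ 3 + m^3) / 6"
      by (intro divide_right_mono mult_left_mono Y3) auto
    finally show "cmod (iexp (\<theta> * Y \<omega>) - poly \<omega>) \<le> \<bar>\<theta>\<bar>^3 * (xi d \<omega> u ^ 3 + m^3) / 6" .
  qed (use fin in simp_all)
  also have "\<dots> = \<bar>\<theta>\<bar>^3 * ((1 - 7*p/8)^d + m^3) / 6"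
    using fin by (simp add: Bochner_Integration.integral_add M3)
  finally show ?thesis unfolding Epoly by (simp add: Y_def m_def)
qed

lemma exp_minus_approx:
  fixes y :: real assumes "0 \<le> y"
  shows "\<bar>(1 - y) - exp (- y)\<bar> \<le> y^2"
proof -
  have lo: "1 - y \<le> exp (- y)" by (rule exp_minus_ge)
  have e1: "1 + y \<le> exp y" by (rule exp_ge_add_one_self)
  have "exp (- y) = 1 / exp y" by (simp add: exp_minus inverse_eq_divide)
  also have "\<dots> \<le> 1 / (1 + y)" using assms e1 by (intro divide_left_mono) auto
  also have "\<dots> \<le> 1 - y + y^2"
  proof -
    have "1 \<le> (1 - y + y^2) * (1 + y)" using assms by (simp add: algebra_simps power2_eq_square power3_eq_cube[symmetric])
    then show ?thesis using assms by (simp add: divide_le_eq)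
  qed
  finally show ?thesis using lo by simp
qed

lemma a2_le_b:
  fixes p :: real
  assumes "0 \<le> p" "p \<le> 1"
  shows "(1 - p/2)^2 \<le> 1 - 3*p/4"
proof -
  have "p * p \<le> p * 1" by (rule mult_left_mono[OF assms(2) assms(1)])
  then show ?thesis by (simp add: power2_eq_square algebra_simps)
qed

lemma cmod_char_le1:
  fixes M :: "'a pmf"
  shows "cmod (measure_pmf.expectation M (\<lambda>\<omega>. iexp (f \<omega>))) \<le> 1"
proof -
  have "cmod (measure_pmf.expectation M (\<lambda>\<omega>. iexp (f \<omega>))) \<le> measure_pmf.expectation M (\<lambda>\<omega>. cmod (iexp (f \<omega>)))"
    by (rule integral_norm_bound)
  also have "\<dots> = 1" by (simp add: norm_exp_i_times)
  finally show ?thesis .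
qed

lemma char_bound:
  fixes t :: real
  assumes d: "d \<ge> 1" and W: "samepar W" "W \<subseteq> cube_vertices d" "card W = 2 ^ (d - 1)"
    and p: "0 \<le> p" "p \<le> 1"
  defines "y \<equiv> (t / sigma_p p d)^2 * ((1 - 3*p/4)^d - ((1 - p/2)^d)^2) / 2"
  shows "cmod (measure_pmf.expectation (Qdp d p) (\<lambda>\<omega>. iexp (t * XW d p W \<omega>))
           - complex_of_real (exp (- (real (card W) * y))))
     \<le> real (card W) * (\<bar>t / sigma_p p d\<bar>^3 * ((1 - 7*p/8)^d + ((1 - p/2)^d)^3) / 6 + y^2)"
proof -
  let ?\<theta> = "t / sigma_p p d"
  let ?\<phi> = "\<lambda>u. measure_pmf.expectation (Pi_pmf (star d u) False (\<lambda>_. bernoulli_pmf p))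
          (\<lambda>\<omega>. iexp (?\<theta> * (xi d \<omega> u - (1 - p/2) ^ d)))"
  have fW: "finite W" by (rule finite_subset[OF W(2)]) simp
  have V0: "0 \<le> (1 - 3*p/4)^d - ((1 - p/2)^d)^2"
  proof -
    have "((1 - p/2)^d)^2 = ((1 - p/2)^2)^d" by (simp add: power_mult[symmetric] mult.commute)
    also have "\<dots> \<le> (1 - 3*p/4)^d" using a2_le_b[OF p] by (intro power_mono) auto
    finally show ?thesis by simp
  qed
  have y0: "0 \<le> y" unfolding y_def using V0 by simp
  have "complex_of_real (exp (- (real (card W) * y))) = (\<Prod>u\<in>W. complex_of_real (exp (- y)))"
  proof -
    have "exp (- (real (card W) * y)) = exp (- y) ^ card W"
      using exp_of_nat_mult[of "card W" "- y"] by simp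
    then show ?thesis by simp
  qed
  then have "cmod (measure_pmf.expectation (Qdp d p) (\<lambda>\<omega>. iexp (t * XW d p W \<omega>))
           - complex_of_real (exp (- (real (card W) * y))))
      = cmod ((\<Prod>u\<in>W. ?\<phi> u) - (\<Prod>u\<in>W. complex_of_real (exp (- y))))"
    by (simp only: char_prod[OF d W])
  also have "\<dots> \<le> (\<Sum>u\<in>W. cmod (?\<phi> u - complex_of_real (exp (- y))))"
  proof (rule norm_prod_diff)
    fix u show "cmod (?\<phi> u) \<le> 1" by (rule cmod_char_le1)
  next
    fix u show "cmod (complex_of_real (exp (- y))) \<le> 1" using y0 by simp
  qed
  also have "\<dots> \<le> (\<Sum>u\<in>W. \<bar>?\<theta>\<bar>^3 * ((1 - 7*p/8)^d + ((1 - p/2)^d)^3) / 6 + y^2)"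
  proof (rule sum_mono)
    fix u assume u: "u \<in> W"
    have uV: "u \<in> cube_vertices d" using u W(2) by auto
    have "cmod (?\<phi> u - complex_of_real (exp (- y)))
        \<le> cmod (?\<phi> u - complex_of_real (1 - y)) + cmod (complex_of_real (1 - y) - complex_of_real (exp (- y)))"
      using norm_triangle_ineq[of "?\<phi> u - complex_of_real (1 - y)" "complex_of_real (1 - y) - complex_of_real (exp (- y))"]
      by simp
    also have "cmod (?\<phi> u - complex_of_real (1 - y)) \<le> \<bar>?\<theta>\<bar>^3 * ((1 - 7*p/8)^d + ((1 - p/2)^d)^3) / 6"
      using factor_bound[OF uV p, of ?\<theta>] unfolding y_def by (simp add: power_mult_distrib)
    also have "cmod (complex_of_real (1 - y) - complex_of_real (exp (- y))) \<le> y^2"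
      using exp_minus_approx[OF y0] by (simp del: of_real_diff add: of_real_diff[symmetric])
    finally show "cmod (?\<phi> u - complex_of_real (exp (- y))) \<le> \<bar>?\<theta>\<bar>^3 * ((1 - 7*p/8)^d + ((1 - p/2)^d)^3) / 6 + y^2"
      by simp
  qed
  also have "\<dots> = real (card W) * (\<bar>?\<theta>\<bar>^3 * ((1 - 7*p/8)^d + ((1 - p/2)^d)^3) / 6 + y^2)"
    by simp
  finally show ?thesis .
qed


lemma par_facts:
  fixes p :: real assumes p: "0 < p" "p < 1"
  shows "0 < 1 - 3*p/4" "0 < 1 - p/2" "0 < 1 - 7*p/8" "(1 - p/2)^2 < 1 - 3*p/4"
    "(1 - 7*p/8)^2 < 2 * (1 - 3*p/4)^3" "(1 - p/2)^6 < 2 * (1 - 3*p/4)^3"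
proof -
  show "0 < 1 - 3*p/4" "0 < 1 - p/2" "0 < 1 - 7*p/8" using p by auto
  have "p * p < p * 1" by (rule mult_strict_left_mono[OF p(2) p(1)])
  then show a2: "(1 - p/2)^2 < 1 - 3*p/4" by (simp add: power2_eq_square algebra_simps)
  define r where "r = 1 - p"
  have r: "0 < r" using p by (simp add: r_def)
  have "2 * (1 - 3*p/4)^3 - (1 - 7*p/8)^2 = (1 + 4*r + 5*r^2 + 54*r^3) / 64"
    unfolding r_def by (simp add: power2_eq_square power3_eq_cube field_simps)
  moreover have "0 < 1 + 4*r + 5*r^2 + 54*r^3" using r by (simp add: add_pos_nonneg)
  ultimately show "(1 - 7*p/8)^2 < 2 * (1 - 3*p/4)^3" by simp
  have "(1 - p/2)^6 = ((1 - p/2)^2)^3" by (simp add: power_mult[symmetric])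
  also have "\<dots> < (1 - 3*p/4)^3" using a2 by (intro power_strict_mono) auto
  also have "\<dots> < 2 * (1 - 3*p/4)^3" using p by simp
  finally show "(1 - p/2)^6 < 2 * (1 - 3*p/4)^3" .
qed

lemma sq_sum_le: "((x::real) + y)^2 \<le> 2 * (x^2 + y^2)"
proof -
  have "0 \<le> (x - y)^2" by simp
  then show ?thesis by (simp add: power2_eq_square algebra_simps)
qed

lemma Q_lim:
  fixes p :: real assumes p: "0 < p" "p < 1"
  shows "(\<lambda>d. 2^(d-1) * ((1-7*p/8)^d + ((1-p/2)^d)^3) / (sqrt (2^(d-1) * (1-3*p/4)^d))^3) \<longlonglongrightarrow> 0"
proof -
  note pf = par_facts[OF p]
  define a where "a = 1 - p/2"
  define b where "b = 1 - 3*p/4"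
  define c where "c = 1 - 7*p/8"
  have a: "0 < a" and b: "0 < b" and c: "0 < c" using pf by (auto simp: a_def b_def c_def)
  have c2: "c^2 / (2 * b^3) < 1" and a6: "a^6 / (2 * b^3) < 1"
    using pf b by (simp_all add: a_def b_def c_def)
  define Q where "Q d = 2^(d-1) * (c^d + (a^d)^3) / (sqrt (2^(d-1) * b^d))^3" for d :: nat
  define R where "R d = 4 * ((c^2 / (2 * b^3))^d + (a^6 / (2 * b^3))^d)" for d :: nat
  have Q0: "0 \<le> Q d" for d unfolding Q_def using a b c by simp
  have QR: "(Q d)^2 \<le> R d" if d: "d \<ge> 1" for d
  proof -
    define n :: real where "n = 2^(d-1)"
    have n: "0 < n" by (simp add: n_def)
    have n2: "2 * n = 2^d" using d unfolding n_def by (cases d) auto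
    define X where "X = c^d + (a^d)^3"
    have s2: "(sqrt (n * b^d))^2 = n * b^d" using n b by simp
    have "(Q d)^2 = n^2 * X^2 / ((sqrt (n * b^d))^2)^3"
      unfolding Q_def n_def[symmetric] X_def[symmetric] by (simp add: power_divide power_mult_distrib power_mult[symmetric] mult.commute)
    also have "\<dots> = X^2 / (n * (b^3)^d)"
      unfolding s2 using n b by (simp add: power_mult_distrib power_mult[symmetric] mult.commute power2_eq_square power3_eq_cube)
    also have "\<dots> \<le> 2 * ((c^2)^d + (a^6)^d) / (n * (b^3)^d)"
    proof (rule divide_right_mono)
      have "X^2 \<le> 2 * ((c^d)^2 + ((a^d)^3)^2)" unfolding X_def by (rule sq_sum_le)
      also have "(c^d)^2 = (c^2)^d" by (simp add: power_mult[symmetric] mult.commute)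
      also have "((a^d)^3)^2 = (a^6)^d" by (simp add: power_mult[symmetric] mult.commute)
      finally show "X^2 \<le> 2 * ((c^2)^d + (a^6)^d)" .
    qed (use n b in simp)
    also have "\<dots> = R d"
    proof -
      have "2 * ((c^2)^d + (a^6)^d) / (n * (b^3)^d) = 4 * ((c^2)^d + (a^6)^d) / ((2 * b^3)^d)"
        using n b by (simp add: power_mult_distrib field_simps n2[symmetric])
      then show ?thesis unfolding R_def by (simp add: power_divide add_divide_distrib)
    qed
    finally show ?thesis .
  qed
  have Rlim: "R \<longlonglongrightarrow> 0"
    unfolding R_def using c2 a6 b c a
    by (auto intro!: tendsto_eq_intros LIMSEQ_realpow_zero simp: zero_le_divide_iff)
  have "(\<lambda>d. sqrt (R d)) \<longlonglongrightarrow> sqrt 0" by (intro tendsto_real_sqrt Rlim)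
  then have sR: "(\<lambda>d. sqrt (R d)) \<longlonglongrightarrow> 0" by simp
  have "Q \<longlonglongrightarrow> 0"
  proof (rule tendsto_sandwich[OF _ _ tendsto_const sR])
    show "\<forall>\<^sub>F d in sequentially. 0 \<le> Q d" using Q0 by simp
    show "\<forall>\<^sub>F d in sequentially. Q d \<le> sqrt (R d)"
      using eventually_ge_at_top[of "1::nat"]
      by eventually_elim (use Q0 QR in \<open>auto intro: real_le_rsqrt\<close>)
  qed
  then show ?thesis unfolding Q_def a_def b_def c_def .
qed

lemma sigma_eq_sqrt:
  assumes "d \<ge> 1" "p \<le> 1"
  shows "sigma_p p d = sqrt (2 ^ (d - 1) * (1 - 3*p/4) ^ d)"
proof -
  have "sigma_p p d \<ge> 0" unfolding sigma_p_def using assms by simp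
  then have "sigma_p p d = sqrt ((sigma_p p d)^2)" by simp
  then show ?thesis using sigma_sq_eq[OF assms] by simp
qed

lemma clt_char:
  fixes p t :: real and Wf :: "nat \<Rightarrow> nat set set"
  assumes p: "0 < p" "p < 1"
    and W: "\<And>d. samepar (Wf d)" "\<And>d. Wf d \<subseteq> cube_vertices d" "\<And>d. d \<ge> 1 \<Longrightarrow> card (Wf d) = 2 ^ (d - 1)"
  shows "(\<lambda>d. measure_pmf.expectation (Qdp d p) (\<lambda>\<omega>. iexp (t * XW d p (Wf d) \<omega>)))
           \<longlonglongrightarrow> complex_of_real (exp (- (t^2) / 2))"
proof -
  note pf = par_facts[OF p]
  define a where "a = 1 - p/2"
  define b where "b = 1 - 3*p/4"
  define c where "c = 1 - 7*p/8"
  have a: "0 < a" and b: "0 < b" and c: "0 < c" using pf by (auto simp: a_def b_def c_def)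
  have ab: "a^2 / b < 1" using pf b by (simp add: a_def b_def)
  define \<rho> where "\<rho> = a^2 / b"
  have \<rho>: "0 \<le> \<rho>" "\<rho> < 1" using ab a b by (auto simp: \<rho>_def)
  define y where "y d = (t / sigma_p p d)^2 * ((1 - 3*p/4)^d - ((1 - p/2)^d)^2) / 2" for d
  define Q where "Q d = 2^(d-1) * ((1-7*p/8)^d + ((1-p/2)^d)^3) / (sqrt (2^(d-1) * (1-3*p/4)^d))^3" for d :: nat
  define B where "B d = \<bar>t\<bar>^3 / 6 * Q d + 2 * (t^2/2 * (1 - \<rho>^d))^2 * (1/2)^d" for d :: nat
  have ny: "real (card (Wf d)) * y d = t^2/2 * (1 - \<rho>^d)" if d: "d \<ge> 1" for d
  proof -
    have s2: "(sigma_p p d)^2 = 2 ^ (d - 1) * b ^ d" using sigma_sq_eq[OF d] p by (simp add: b_def)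
    have "((1 - p/2)^d)^2 = (a^2)^d" by (simp add: a_def power_mult[symmetric] mult.commute)
    then have "real (card (Wf d)) * y d = 2 ^ (d - 1) * (t^2 / (2 ^ (d - 1) * b ^ d)) * (b^d - (a^2)^d) / 2"
      unfolding y_def W(3)[OF d] using s2 by (simp add: power_divide b_def)
    also have "\<dots> = t^2/2 * (1 - (a^2)^d / b^d)" using b by (simp add: field_simps)
    finally show ?thesis by (simp add: \<rho>_def power_divide)
  qed
  have bound: "cmod (measure_pmf.expectation (Qdp d p) (\<lambda>\<omega>. iexp (t * XW d p (Wf d) \<omega>))
           - complex_of_real (exp (- (t^2/2 * (1 - \<rho>^d))))) \<le> B d" if d: "d \<ge> 1" for d
  proof -
    let ?n = "real (card (Wf d))"
    have n: "?n = 2^(d-1)" using W(3)[OF d] by simp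
    have sg: "sigma_p p d = sqrt (2 ^ (d - 1) * (1 - 3*p/4) ^ d)" using sigma_eq_sqrt[OF d] p by simp
    have sp: "sigma_p p d > 0" using sigma_pos p by simp
    have "cmod (measure_pmf.expectation (Qdp d p) (\<lambda>\<omega>. iexp (t * XW d p (Wf d) \<omega>))
           - complex_of_real (exp (- (?n * y d))))
      \<le> ?n * (\<bar>t / sigma_p p d\<bar>^3 * ((1 - 7*p/8)^d + ((1 - p/2)^d)^3) / 6 + (y d)^2)"
      unfolding y_def by (rule char_bound[OF d W(1) W(2) W(3)[OF d]]) (use p in auto)
    also have "?n * (\<bar>t / sigma_p p d\<bar>^3 * ((1 - 7*p/8)^d + ((1 - p/2)^d)^3) / 6 + (y d)^2)
        = \<bar>t\<bar>^3 / 6 * Q d + (?n * y d)^2 / ?n"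
      unfolding Q_def n sg[symmetric] using sp by (simp add: power_divide abs_divide power2_eq_square field_simps)
    also have "(?n * y d)^2 / ?n = 2 * (t^2/2 * (1 - \<rho>^d))^2 * (1/2)^d"
    proof -
      have "(2::real)^(d-1) * 2 = 2^d" using d by (cases d) auto
      then show ?thesis unfolding ny[OF d] by (simp add: n field_simps power_one_over)
    qed
    finally show ?thesis unfolding ny[OF d] B_def .
  qed
  have Blim: "B \<longlonglongrightarrow> 0"
  proof -
    have "Q \<longlonglongrightarrow> 0" unfolding Q_def by (rule Q_lim[OF p])
    moreover have "(\<lambda>d. (1/2::real)^d) \<longlonglongrightarrow> 0" by (rule LIMSEQ_realpow_zero) auto
    ultimately have "B \<longlonglongrightarrow> \<bar>t\<bar>^3 / 6 * 0 + 2 * (t^2/2 * (1 - 0))^2 * 0"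
      unfolding B_def by (intro tendsto_intros) (use \<rho> in auto)
    then show ?thesis by simp
  qed
  have elim: "(\<lambda>d. complex_of_real (exp (- (t^2/2 * (1 - \<rho>^d))))) \<longlonglongrightarrow> complex_of_real (exp (- (t^2/2 * (1 - 0))))"
    by (intro tendsto_intros LIMSEQ_realpow_zero \<rho>)
  have "(\<lambda>d. measure_pmf.expectation (Qdp d p) (\<lambda>\<omega>. iexp (t * XW d p (Wf d) \<omega>))
           - complex_of_real (exp (- (t^2/2 * (1 - \<rho>^d))))) \<longlonglongrightarrow> 0"
  proof (rule Lim_null_comparison[OF _ Blim])
    show "\<forall>\<^sub>F d in sequentially. cmod (measure_pmf.expectation (Qdp d p) (\<lambda>\<omega>. iexp (t * XW d p (Wf d) \<omega>))
           - complex_of_real (exp (- (t^2/2 * (1 - \<rho>^d))))) \<le> B d"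
      using eventually_ge_at_top[of "1::nat"] by eventually_elim (rule bound)
  qed
  from Lim_transform[OF elim this] show ?thesis by simp
qed


lemma clt_weak:
  fixes p :: real and Wf :: "nat \<Rightarrow> nat set set"
  assumes p: "0 < p" "p < 1"
    and W: "\<And>d. samepar (Wf d)" "\<And>d. Wf d \<subseteq> cube_vertices d" "\<And>d. d \<ge> 1 \<Longrightarrow> card (Wf d) = 2 ^ (d - 1)"
  shows "weak_conv_m (\<lambda>d. distr (measure_pmf (Qdp d p)) borel (XW d p (Wf d))) std_normal_distribution"
proof (rule levy_continuity)
  fix d show "real_distribution (distr (measure_pmf (Qdp d p)) borel (XW d p (Wf d)))"
    by (rule prob_space.real_distribution_distr[OF measure_pmf.prob_space_axioms]) simp
next
  show "real_distribution std_normal_distribution" by (rule real_dist_normal_dist)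
next
  fix t
  have "char (distr (measure_pmf (Qdp d p)) borel (XW d p (Wf d))) t
      = measure_pmf.expectation (Qdp d p) (\<lambda>\<omega>. iexp (t * XW d p (Wf d) \<omega>))" for d
    unfolding char_def by (subst integral_distr) simp_all
  then show "(\<lambda>d. char (distr (measure_pmf (Qdp d p)) borel (XW d p (Wf d))) t) \<longlonglongrightarrow> char std_normal_distribution t"
    using clt_char[OF p W] by (simp add: char_std_normal_distribution)
qed

lemma clt_bdd:
  fixes p :: real and Wf :: "nat \<Rightarrow> nat set set" and g :: "real \<Rightarrow> real"
  assumes p: "0 < p" "p < 1"
    and W: "\<And>d. samepar (Wf d)" "\<And>d. Wf d \<subseteq> cube_vertices d" "\<And>d. d \<ge> 1 \<Longrightarrow> card (Wf d) = 2 ^ (d - 1)"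
    and g: "continuous_on UNIV g" "\<And>x. \<bar>g x\<bar> \<le> B"
  shows "(\<lambda>d. measure_pmf.expectation (Qdp d p) (\<lambda>\<omega>. g (XW d p (Wf d) \<omega>))) \<longlonglongrightarrow> integral\<^sup>L std_normal_distribution g"
proof -
  have "(\<lambda>d. integral\<^sup>L (distr (measure_pmf (Qdp d p)) borel (XW d p (Wf d))) g) \<longlonglongrightarrow> integral\<^sup>L std_normal_distribution g"
  proof (rule weak_conv_imp_integral_bdd_continuous_conv)
    fix d show "real_distribution (distr (measure_pmf (Qdp d p)) borel (XW d p (Wf d)))"
      by (rule prob_space.real_distribution_distr[OF measure_pmf.prob_space_axioms]) simp
  next
    show "real_distribution std_normal_distribution" by (rule real_dist_normal_dist)
  next
    show "weak_conv_m (\<lambda>d. distr (measure_pmf (Qdp d p)) borel (XW d p (Wf d))) std_normal_distribution"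
      by (rule clt_weak[OF p W])
  next
    fix x show "isCont g x" using g(1) by (simp add: continuous_on_eq_continuous_at)
  next
    fix x show "norm (g x) \<le> B" using g(2) by simp
  qed
  moreover have "integral\<^sup>L (distr (measure_pmf (Qdp d p)) borel (XW d p (Wf d))) g
      = measure_pmf.expectation (Qdp d p) (\<lambda>\<omega>. g (XW d p (Wf d) \<omega>))" for d
    using g(1) by (subst integral_distr) (auto intro: borel_measurable_continuous_onI)
  ultimately show ?thesis by simp
qed


definition BL :: "(real \<Rightarrow> real) \<Rightarrow> bool" where
  "BL g \<longleftrightarrow> (\<exists>B. \<forall>x. \<bar>g x\<bar> \<le> B) \<and> (\<exists>L\<ge>0. \<forall>x y. \<bar>g x - g y\<bar> \<le> L * \<bar>x - y\<bar>)"

lemma BL_cont: "BL g \<Longrightarrow> continuous_on UNIV g"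
proof -
  assume "BL g"
  then obtain L where L: "L \<ge> 0" "\<And>x y. \<bar>g x - g y\<bar> \<le> L * \<bar>x - y\<bar>" unfolding BL_def by blast
  have "L-lipschitz_on UNIV g"
    by (rule lipschitz_onI) (use L in \<open>auto simp: dist_real_def\<close>)
  then show ?thesis by (rule lipschitz_on_continuous_on)
qed

lemma BL_const: "BL (\<lambda>_. c)"
  unfolding BL_def by (intro conjI) (rule exI[of _ "\<bar>c\<bar>"], simp, rule exI[of _ 0], simp)

lemma BL_mult:
  assumes "BL g" "BL h" shows "BL (\<lambda>x. g x * h x)"
proof -
  obtain B1 L1 where 1: "\<And>x. \<bar>g x\<bar> \<le> B1" "L1 \<ge> 0" "\<And>x y. \<bar>g x - g y\<bar> \<le> L1 * \<bar>x - y\<bar>"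
    using assms(1) unfolding BL_def by blast
  obtain B2 L2 where 2: "\<And>x. \<bar>h x\<bar> \<le> B2" "L2 \<ge> 0" "\<And>x y. \<bar>h x - h y\<bar> \<le> L2 * \<bar>x - y\<bar>"
    using assms(2) unfolding BL_def by blast
  have B1: "B1 \<ge> 0" using 1(1)[of 0] by simp
  have B2: "B2 \<ge> 0" using 2(1)[of 0] by simp
  have bnd: "\<bar>g x * h x\<bar> \<le> B1 * B2" for x
    unfolding abs_mult by (intro mult_mono 1(1) 2(1)) (auto simp: B1)
  have lip: "\<bar>g x * h x - g y * h y\<bar> \<le> (B1 * L2 + B2 * L1) * \<bar>x - y\<bar>" for x y
  proof -
    have "g x * h x - g y * h y = g x * (h x - h y) + h y * (g x - g y)" by (simp add: algebra_simps)
    then have "\<bar>g x * h x - g y * h y\<bar> \<le> \<bar>g x\<bar> * \<bar>h x - h y\<bar> + \<bar>h y\<bar> * \<bar>g x - g y\<bar>"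
      by (simp add: abs_mult[symmetric] abs_triangle_ineq)
    also have "\<dots> \<le> B1 * (L2 * \<bar>x - y\<bar>) + B2 * (L1 * \<bar>x - y\<bar>)"
      by (intro add_mono mult_mono 1 2) (auto simp: B1 B2)
    finally show ?thesis by (simp add: algebra_simps)
  qed
  show ?thesis unfolding BL_def using bnd lip B1 B2 1(2) 2(2)
    by (intro conjI exI[of _ "B1 * B2"] exI[of _ "B1 * L2 + B2 * L1"]) auto
qed

definition Rset :: "(real \<times> real \<Rightarrow> real) set" where
  "Rset = {F. \<exists>L. (\<forall>gh\<in>set L. BL (fst gh) \<and> BL (snd gh)) \<and>
      F = (\<lambda>z. sum_list (map (\<lambda>gh. fst gh (fst z) * snd gh (snd z)) L))}"

lemma Rset_add: "F \<in> Rset \<Longrightarrow> G \<in> Rset \<Longrightarrow> (\<lambda>z. F z + G z) \<in> Rset"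
  unfolding Rset_def
proof safe
  fix L1 L2 :: "((real \<Rightarrow> real) \<times> (real \<Rightarrow> real)) list"
  assume "\<forall>gh\<in>set L1. BL (fst gh) \<and> BL (snd gh)" "\<forall>gh\<in>set L2. BL (fst gh) \<and> BL (snd gh)"
  then show "\<exists>L. (\<forall>gh\<in>set L. BL (fst gh) \<and> BL (snd gh)) \<and>
      (\<lambda>z. (\<Sum>gh\<leftarrow>L1. fst gh (fst z) * snd gh (snd z)) + (\<Sum>gh\<leftarrow>L2. fst gh (fst z) * snd gh (snd z))) =
      (\<lambda>z. \<Sum>gh\<leftarrow>L. fst gh (fst z) * snd gh (snd z))"
    by (intro exI[of _ "L1 @ L2"]) auto
qed

lemma sum_list_concat_mult:
  fixes x y :: real and L1 L2 :: "((real \<Rightarrow> real) \<times> (real \<Rightarrow> real)) list"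
  shows "sum_list (map (\<lambda>gh. fst gh x * snd gh y)
      (concat (map (\<lambda>a. map (\<lambda>b. (\<lambda>x. fst a x * fst b x, \<lambda>y. snd a y * snd b y)) L2) L1)))
   = sum_list (map (\<lambda>gh. fst gh x * snd gh y) L1) * sum_list (map (\<lambda>gh. fst gh x * snd gh y) L2)"
proof (induction L1)
  case Nil
  then show ?case by simp
next
  case (Cons a L1)
  have "sum_list (map (\<lambda>gh. fst gh x * snd gh y) (map (\<lambda>b. (\<lambda>x. fst a x * fst b x, \<lambda>y. snd a y * snd b y)) L2))
      = sum_list (map (\<lambda>b. (fst a x * snd a y) * (fst b x * snd b y)) L2)"
    by (simp add: o_def algebra_simps)
  also have "\<dots> = (fst a x * snd a y) * sum_list (map (\<lambda>gh. fst gh x * snd gh y) L2)"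
    by (rule sum_list_const_mult)
  finally show ?case using Cons by (simp add: algebra_simps)
qed

lemma Rset_mult: "F \<in> Rset \<Longrightarrow> G \<in> Rset \<Longrightarrow> (\<lambda>z. F z * G z) \<in> Rset"
  unfolding Rset_def
proof safe
  fix L1 L2 :: "((real \<Rightarrow> real) \<times> (real \<Rightarrow> real)) list"
  assume A: "\<forall>gh\<in>set L1. BL (fst gh) \<and> BL (snd gh)" "\<forall>gh\<in>set L2. BL (fst gh) \<and> BL (snd gh)"
  let ?L = "concat (map (\<lambda>a. map (\<lambda>b. (\<lambda>x. fst a x * fst b x, \<lambda>y. snd a y * snd b y)) L2) L1)"
  have "\<forall>gh\<in>set ?L. BL (fst gh) \<and> BL (snd gh)" using A by (auto intro!: BL_mult)
  moreover have "(\<lambda>z. (\<Sum>gh\<leftarrow>L1. fst gh (fst z) * snd gh (snd z)) * (\<Sum>gh\<leftarrow>L2. fst gh (fst z) * snd gh (snd z))) =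
      (\<lambda>z. \<Sum>gh\<leftarrow>?L. fst gh (fst z) * snd gh (snd z))"
    by (simp only: sum_list_concat_mult)
  ultimately show "\<exists>L. (\<forall>gh\<in>set L. BL (fst gh) \<and> BL (snd gh)) \<and>
      (\<lambda>z. (\<Sum>gh\<leftarrow>L1. fst gh (fst z) * snd gh (snd z)) * (\<Sum>gh\<leftarrow>L2. fst gh (fst z) * snd gh (snd z))) =
      (\<lambda>z. \<Sum>gh\<leftarrow>L. fst gh (fst z) * snd gh (snd z))"
    by blast
qed

lemma Rset_prod: "BL g \<Longrightarrow> BL h \<Longrightarrow> (\<lambda>z. g (fst z) * h (snd z)) \<in> Rset"
  unfolding Rset_def by (intro CollectI exI[of _ "[(g, h)]"]) auto

lemma Rset_const: "(\<lambda>_. c) \<in> Rset"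
  using Rset_prod[OF BL_const[of c] BL_const[of 1]] by simp

lemma Rset_cont: "F \<in> Rset \<Longrightarrow> continuous_on UNIV F"
  unfolding Rset_def
proof safe
  fix L :: "((real \<Rightarrow> real) \<times> (real \<Rightarrow> real)) list"
  assume "\<forall>gh\<in>set L. BL (fst gh) \<and> BL (snd gh)"
  then show "continuous_on UNIV (\<lambda>z. \<Sum>gh\<leftarrow>L. fst gh (fst z) * snd gh (snd z))"
  proof (induction L)
    case Nil
    then show ?case by simp
  next
    case (Cons a L)
    have c1: "continuous_on UNIV (fst a)" "continuous_on UNIV (snd a)"
      using Cons.prems BL_cont[of "fst a"] BL_cont[of "snd a"] by auto
    have "continuous_on UNIV (\<lambda>z::real\<times>real. fst a (fst z))"
      by (rule continuous_on_compose2[OF c1(1) continuous_on_fst[OF continuous_on_id]]) auto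
    moreover have "continuous_on UNIV (\<lambda>z::real\<times>real. snd a (snd z))"
      by (rule continuous_on_compose2[OF c1(2) continuous_on_snd[OF continuous_on_id]]) auto
    ultimately have "continuous_on UNIV (\<lambda>z. fst a (fst z) * snd a (snd z))"
      by (intro continuous_intros)
    then show ?case using Cons by (auto intro!: continuous_intros)
  qed
qed

interpretation N2: pair_prob_space std_normal_distribution std_normal_distribution
  unfolding pair_prob_space_def pair_sigma_finite_def
  using prob_space_normal_density by (auto intro: prob_space_imp_sigma_finite)

lemma sets_std_normal2: "sets std_normal2 = sets borel"
proof -
  have "sets std_normal2 = sets (borel \<Otimes>\<^sub>M borel :: (real \<times> real) measure)"
    unfolding std_normal2_def by (rule sets_pair_measure_cong) simp_all
  then show ?thesis by (simp only: borel_prod)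
qed

lemma std2_prob: "prob_space std_normal2"
  unfolding std_normal2_def by (rule N2.prob_space_axioms)

lemma meas2: "continuous_on UNIV F \<Longrightarrow> F \<in> borel_measurable std_normal2"
  using measurable_cong_sets[OF sets_std_normal2 refl] borel_measurable_continuous_onI by blast

lemma int2:
  fixes F :: "real \<times> real \<Rightarrow> real" and B :: real
  shows "continuous_on UNIV F \<Longrightarrow> (\<And>z. \<bar>F z\<bar> \<le> B) \<Longrightarrow> integrable std_normal2 F"
  unfolding std_normal2_def
  by (rule N2.integrable_const_bound[where B=B]) (auto simp: meas2[unfolded std_normal2_def])

lemma int2_prod:
  fixes g h :: "real \<Rightarrow> real"
  assumes g: "continuous_on UNIV g" "\<And>x. \<bar>g x\<bar> \<le> B1" and h: "continuous_on UNIV h" "\<And>x. \<bar>h x\<bar> \<le> B2"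
  shows "integral\<^sup>L std_normal2 (\<lambda>z. g (fst z) * h (snd z))
     = integral\<^sup>L std_normal_distribution g * integral\<^sup>L std_normal_distribution h"
proof -
  have c: "continuous_on UNIV (\<lambda>z::real\<times>real. g (fst z) * h (snd z))"
  proof -
    have "continuous_on UNIV (\<lambda>z::real\<times>real. g (fst z))"
      by (rule continuous_on_compose2[OF g(1) continuous_on_fst[OF continuous_on_id]]) auto
    moreover have "continuous_on UNIV (\<lambda>z::real\<times>real. h (snd z))"
      by (rule continuous_on_compose2[OF h(1) continuous_on_snd[OF continuous_on_id]]) auto
    ultimately show ?thesis by (rule continuous_on_mult)
  qed
  have B1: "0 \<le> B1" using g(2)[of 0] by simp
  have "\<bar>g (fst z) * h (snd z)\<bar> \<le> B1 * B2" for z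
    unfolding abs_mult by (intro mult_mono g(2) h(2)) (auto simp: B1)
  then have I: "integrable std_normal2 (\<lambda>z. g (fst z) * h (snd z))" by (rule int2[OF c])
  have "integral\<^sup>L std_normal2 (\<lambda>z. g (fst z) * h (snd z))
      = (\<integral>x. (\<integral>y. g x * h y \<partial>std_normal_distribution) \<partial>std_normal_distribution)"
    using N2.integral_fst[of "\<lambda>x y. g x * h y"] I unfolding std_normal2_def by (simp add: case_prod_unfold)
  also have "\<dots> = integral\<^sup>L std_normal_distribution g * integral\<^sup>L std_normal_distribution h"
    by simp
  finally show ?thesis .
qed

lemma BL_bound: "BL g \<Longrightarrow> \<exists>B. \<forall>x. \<bar>g x\<bar> \<le> B"
  unfolding BL_def by blast

lemma Phi_eq:
  assumes "W \<subseteq> cube_vertices d"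
  shows "Phi d W \<omega> = (\<Sum>u\<in>W. xi d \<omega> u)"
  unfolding Phi_def using assms by (intro sum.cong refl powi_Np) auto

lemma qdp_fin: "finite (set_pmf (Qdp d p))"
  unfolding Qdp_def by (rule finite_set_pmf_Pi) simp

lemma prodconv:
  fixes p :: real
  assumes p: "0 < p" "p < 1" and g: "BL g" and h: "BL h"
  shows "(\<lambda>d. measure_pmf.expectation (Qdp d p)
      (\<lambda>\<omega>. g (XW d p (even_vertices d) \<omega>) * h (XW d p (odd_vertices d) \<omega>)))
    \<longlonglongrightarrow> integral\<^sup>L std_normal_distribution g * integral\<^sup>L std_normal_distribution h"
proof -
  obtain B1 L1 where 1: "\<And>x. \<bar>g x\<bar> \<le> B1" "L1 \<ge> 0" "\<And>x y. \<bar>g x - g y\<bar> \<le> L1 * \<bar>x - y\<bar>"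
    using g unfolding BL_def by blast
  obtain B2 L2 where 2: "\<And>x. \<bar>h x\<bar> \<le> B2" "L2 \<ge> 0" "\<And>x y. \<bar>h x - h y\<bar> \<le> L2 * \<bar>x - y\<bar>"
    using h unfolding BL_def by blast
  note pf = par_facts[OF p]
  define a where "a = 1 - p/2"
  define b where "b = 1 - 3*p/4"
  have a: "0 < a" and b: "0 < b" using pf by (auto simp: a_def b_def)
  define \<rho> where "\<rho> = a^2 / b"
  have \<rho>: "0 \<le> \<rho>" "\<rho> < 1" using pf a b by (auto simp: \<rho>_def a_def b_def)
  define C where "C = p * (1 - p) * L1 * L2 / (4 * a^2)"
  have Eg: "(\<lambda>d. measure_pmf.expectation (Qdp d p) (\<lambda>\<omega>. g (XW d p (even_vertices d) \<omega>)))
      \<longlonglongrightarrow> integral\<^sup>L std_normal_distribution g"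
    by (rule clt_bdd[OF p samepar_even even_vertices_sub card_even_odd(1) BL_cont[OF g] 1(1)])
  have Eh: "(\<lambda>d. measure_pmf.expectation (Qdp d p) (\<lambda>\<omega>. h (XW d p (odd_vertices d) \<omega>)))
      \<longlonglongrightarrow> integral\<^sup>L std_normal_distribution h"
    by (rule clt_bdd[OF p samepar_odd odd_vertices_sub card_even_odd(2) BL_cont[OF h] 2(1)])
  have bnd: "\<bar>measure_pmf.expectation (Qdp d p) (\<lambda>\<omega>. g (XW d p (even_vertices d) \<omega>) * h (XW d p (odd_vertices d) \<omega>))
      - measure_pmf.expectation (Qdp d p) (\<lambda>\<omega>. g (XW d p (even_vertices d) \<omega>)) *
        measure_pmf.expectation (Qdp d p) (\<lambda>\<omega>. h (XW d p (odd_vertices d) \<omega>))\<bar>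
      \<le> C * (real d * \<rho>^d)" if d: "d \<ge> 1" for d
  proof -
    have s2: "(sigma_p p d)^2 = 2 ^ (d - 1) * b ^ d" using sigma_sq_eq[OF d] p by (simp add: b_def)
    have e1: "(1 - p/2) ^ (2 * (d - 1)) = (a^2)^d / a^2"
    proof -
      have "(a^2)^d = (a^2)^(d-1) * a^2" using d by (cases d) auto
      then show ?thesis using a by (simp add: a_def power_mult)
    qed
    have e2: "real (card (cube_edges d)) = real d * 2 ^ (d - 1)" using card_edges[OF d] by simp
    have "real (card (cube_edges d)) * (p * (1 - p) * (L1 * L2 / (4 * (sigma_p p d)^2) * (1 - p/2) ^ (2 * (d - 1))))
        = C * (real d * \<rho>^d)"
      unfolding s2 e1 e2 C_def \<rho>_def using a b by (simp add: power_divide field_simps)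
    moreover have "\<bar>measure_pmf.expectation (Qdp d p) (\<lambda>\<omega>. g (XW d p (even_vertices d) \<omega>) * h (XW d p (odd_vertices d) \<omega>))
      - measure_pmf.expectation (Qdp d p) (\<lambda>\<omega>. g (XW d p (even_vertices d) \<omega>)) *
        measure_pmf.expectation (Qdp d p) (\<lambda>\<omega>. h (XW d p (odd_vertices d) \<omega>))\<bar>
      \<le> real (card (cube_edges d)) * (p * (1 - p) * (L1 * L2 / (4 * (sigma_p p d)^2) * (1 - p/2) ^ (2 * (d - 1))))"
      by (rule decouple_XY[OF _ _ sigma_pos 1(3) 1(2) 2(3) 2(2)]) (use p in auto)
    ultimately show ?thesis by simp
  qed
  have Dlim: "(\<lambda>d. C * (real d * \<rho>^d)) \<longlonglongrightarrow> 0"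
    using powser_times_n_limit_0[of \<rho>] \<rho> by (intro tendsto_mult_right_zero) auto
  have "(\<lambda>d. measure_pmf.expectation (Qdp d p) (\<lambda>\<omega>. g (XW d p (even_vertices d) \<omega>) * h (XW d p (odd_vertices d) \<omega>))
      - measure_pmf.expectation (Qdp d p) (\<lambda>\<omega>. g (XW d p (even_vertices d) \<omega>)) *
        measure_pmf.expectation (Qdp d p) (\<lambda>\<omega>. h (XW d p (odd_vertices d) \<omega>))) \<longlonglongrightarrow> 0"
  proof (rule Lim_null_comparison[OF _ Dlim])
    show "\<forall>\<^sub>F d in sequentially. norm (measure_pmf.expectation (Qdp d p) (\<lambda>\<omega>. g (XW d p (even_vertices d) \<omega>) * h (XW d p (odd_vertices d) \<omega>))
      - measure_pmf.expectation (Qdp d p) (\<lambda>\<omega>. g (XW d p (even_vertices d) \<omega>)) *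
        measure_pmf.expectation (Qdp d p) (\<lambda>\<omega>. h (XW d p (odd_vertices d) \<omega>))) \<le> C * (real d * \<rho>^d)"
      using eventually_ge_at_top[of "1::nat"] by eventually_elim (use bnd in simp)
  qed
  from Lim_transform[OF tendsto_mult[OF Eg Eh] this] show ?thesis .
qed


lemma Rlist:
  fixes p :: real
  assumes p: "0 < p" "p < 1" and L: "\<forall>gh\<in>set L. BL (fst gh) \<and> BL (snd gh)"
  shows "integrable std_normal2 (\<lambda>z. \<Sum>gh\<leftarrow>L. fst gh (fst z) * snd gh (snd z)) \<and>
    (\<lambda>d. measure_pmf.expectation (Qdp d p)
      (\<lambda>\<omega>. \<Sum>gh\<leftarrow>L. fst gh (XW d p (even_vertices d) \<omega>) * snd gh (XW d p (odd_vertices d) \<omega>)))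
    \<longlonglongrightarrow> integral\<^sup>L std_normal2 (\<lambda>z. \<Sum>gh\<leftarrow>L. fst gh (fst z) * snd gh (snd z))"
  using L
proof (induction L)
  case Nil
  then show ?case by simp
next
  case (Cons a L)
  obtain g h where a: "a = (g, h)" by (cases a)
  have g: "BL g" and h: "BL h" using Cons.prems a by auto
  obtain B1 where B1: "\<And>x. \<bar>g x\<bar> \<le> B1" using BL_bound[OF g] by blast
  obtain B2 where B2: "\<And>x. \<bar>h x\<bar> \<le> B2" using BL_bound[OF h] by blast
  have IH: "integrable std_normal2 (\<lambda>z. \<Sum>gh\<leftarrow>L. fst gh (fst z) * snd gh (snd z))"
    "(\<lambda>d. measure_pmf.expectation (Qdp d p)
      (\<lambda>\<omega>. \<Sum>gh\<leftarrow>L. fst gh (XW d p (even_vertices d) \<omega>) * snd gh (XW d p (odd_vertices d) \<omega>)))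
    \<longlonglongrightarrow> integral\<^sup>L std_normal2 (\<lambda>z. \<Sum>gh\<leftarrow>L. fst gh (fst z) * snd gh (snd z))"
    using Cons by auto
  have c: "continuous_on UNIV (\<lambda>z. g (fst z) * h (snd z))"
    using Rset_cont[OF Rset_prod[OF g h]] .
  have B10: "0 \<le> B1" using B1[of 0] by simp
  have "\<bar>g (fst z) * h (snd z)\<bar> \<le> B1 * B2" for z
    unfolding abs_mult by (intro mult_mono B1 B2) (auto simp: B10)
  then have I1: "integrable std_normal2 (\<lambda>z. g (fst z) * h (snd z))" by (rule int2[OF c])
  have i1: "integral\<^sup>L std_normal2 (\<lambda>z. g (fst z) * h (snd z)) = integral\<^sup>L std_normal_distribution g * integral\<^sup>L std_normal_distribution h"
    by (rule int2_prod[OF BL_cont[OF g] B1 BL_cont[OF h] B2])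
  have "integral\<^sup>L std_normal2 (\<lambda>z. \<Sum>gh\<leftarrow>a # L. fst gh (fst z) * snd gh (snd z))
      = integral\<^sup>L std_normal2 (\<lambda>z. g (fst z) * h (snd z)) + integral\<^sup>L std_normal2 (\<lambda>z. \<Sum>gh\<leftarrow>L. fst gh (fst z) * snd gh (snd z))"
    unfolding a using I1 IH(1) by simp
  moreover have "measure_pmf.expectation (Qdp d p)
      (\<lambda>\<omega>. \<Sum>gh\<leftarrow>a # L. fst gh (XW d p (even_vertices d) \<omega>) * snd gh (XW d p (odd_vertices d) \<omega>))
     = measure_pmf.expectation (Qdp d p) (\<lambda>\<omega>. g (XW d p (even_vertices d) \<omega>) * h (XW d p (odd_vertices d) \<omega>))
       + measure_pmf.expectation (Qdp d p)
      (\<lambda>\<omega>. \<Sum>gh\<leftarrow>L. fst gh (XW d p (even_vertices d) \<omega>) * snd gh (XW d p (odd_vertices d) \<omega>))" for d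
    unfolding a using qdp_fin[of d p] by simp
  moreover have "integrable std_normal2 (\<lambda>z. \<Sum>gh\<leftarrow>a # L. fst gh (fst z) * snd gh (snd z))"
    unfolding a using I1 IH(1) by simp
  ultimately show ?case
    using tendsto_add[OF prodconv[OF p g h] IH(2)] unfolding i1 by simp
qed

lemma Rconv:
  fixes p :: real
  assumes p: "0 < p" "p < 1" and F: "F \<in> Rset"
  shows "integrable std_normal2 F"
    "(\<lambda>d. measure_pmf.expectation (Qdp d p) (\<lambda>\<omega>. F (XW d p (even_vertices d) \<omega>, XW d p (odd_vertices d) \<omega>)))
      \<longlonglongrightarrow> integral\<^sup>L std_normal2 F"
proof -
  obtain L where L: "\<forall>gh\<in>set L. BL (fst gh) \<and> BL (snd gh)"
    and FL: "F = (\<lambda>z. \<Sum>gh\<leftarrow>L. fst gh (fst z) * snd gh (snd z))"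
    using F unfolding Rset_def by blast
  show "integrable std_normal2 F"
    "(\<lambda>d. measure_pmf.expectation (Qdp d p) (\<lambda>\<omega>. F (XW d p (even_vertices d) \<omega>, XW d p (odd_vertices d) \<omega>)))
      \<longlonglongrightarrow> integral\<^sup>L std_normal2 F"
    using Rlist[OF p L] unfolding FL by simp_all
qed

lemma approx_bound:
  fixes f G c1 c2 :: "'a \<Rightarrow> real"
  assumes M: "prob_space M" and I: "integrable M f" "integrable M G" "integrable M c1" "integrable M c2"
    and b: "\<And>x. \<bar>f x - G x\<bar> \<le> e + B * (c1 x + c2 x)"
  shows "\<bar>integral\<^sup>L M f - integral\<^sup>L M G\<bar> \<le> e + B * (integral\<^sup>L M c1 + integral\<^sup>L M c2)"
proof -
  interpret prob_space M by fact
  have "\<bar>integral\<^sup>L M f - integral\<^sup>L M G\<bar> = \<bar>integral\<^sup>L M (\<lambda>x. f x - G x)\<bar>"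
    using I by simp
  also have "\<dots> \<le> integral\<^sup>L M (\<lambda>x. \<bar>f x - G x\<bar>)" by (rule integral_abs_bound)
  also have "\<dots> \<le> integral\<^sup>L M (\<lambda>x. e + B * (c1 x + c2 x))"
    by (rule integral_mono) (use I b in auto)
  also have "\<dots> = e + B * (integral\<^sup>L M c1 + integral\<^sup>L M c2)"
    using I by (simp add: prob_space)
  finally show ?thesis .
qed


lemma max_lip: "\<bar>max (c::real) a - max c b\<bar> \<le> \<bar>a - b\<bar>"
  by (cases "a \<le> c"; cases "b \<le> c") (auto simp: max_def)

lemma min_lip: "\<bar>min (c::real) a - min c b\<bar> \<le> \<bar>a - b\<bar>"
  by (cases "a \<le> c"; cases "b \<le> c") (auto simp: min_def)

definition chi :: "real \<Rightarrow> real \<Rightarrow> real" where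
  "chi K x = max 0 (min 1 (K + 1 - \<bar>x\<bar>))"

lemma chi_ge0: "0 \<le> chi K x" and chi_le1: "chi K x \<le> 1"
  by (auto simp: chi_def)

lemma chi_one: "\<bar>x\<bar> \<le> K \<Longrightarrow> chi K x = 1"
  by (auto simp: chi_def)

lemma chi_zero: "\<bar>x\<bar> \<ge> K + 1 \<Longrightarrow> chi K x = 0"
  by (auto simp: chi_def)

lemma BL_chi: "BL (chi K)"
  unfolding BL_def
proof (intro conjI)
  show "\<exists>B. \<forall>x. \<bar>chi K x\<bar> \<le> B" using chi_ge0 chi_le1 by (intro exI[of _ 1]) auto
  have "\<bar>chi K x - chi K y\<bar> \<le> 1 * \<bar>x - y\<bar>" for x y
  proof -
    have "\<bar>chi K x - chi K y\<bar> \<le> \<bar>min 1 (K + 1 - \<bar>x\<bar>) - min 1 (K + 1 - \<bar>y\<bar>)\<bar>"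
      unfolding chi_def by (rule max_lip)
    also have "\<dots> \<le> \<bar>(K + 1 - \<bar>x\<bar>) - (K + 1 - \<bar>y\<bar>)\<bar>" by (rule min_lip)
    also have "\<dots> = \<bar>\<bar>y\<bar> - \<bar>x\<bar>\<bar>" by simp
    also have "\<dots> \<le> \<bar>y - x\<bar>" by (rule abs_triangle_ineq3)
    finally show ?thesis by (simp add: abs_minus_commute)
  qed
  then show "\<exists>L\<ge>0. \<forall>x y. \<bar>chi K x - chi K y\<bar> \<le> L * \<bar>x - y\<bar>" by (intro exI[of _ 1]) auto
qed

definition clamp :: "real \<Rightarrow> real \<Rightarrow> real" where
  "clamp K x = max (- K) (min K x)"

lemma BL_clamp: "K \<ge> 0 \<Longrightarrow> BL (clamp K)"
  unfolding BL_def
proof (intro conjI)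
  assume K: "K \<ge> 0"
  show "\<exists>B. \<forall>x. \<bar>clamp K x\<bar> \<le> B" using K by (intro exI[of _ K]) (auto simp: clamp_def)
  have "\<bar>clamp K x - clamp K y\<bar> \<le> 1 * \<bar>x - y\<bar>" for x y
  proof -
    have "\<bar>clamp K x - clamp K y\<bar> \<le> \<bar>min K x - min K y\<bar>"
      unfolding clamp_def by (rule max_lip)
    also have "\<dots> \<le> \<bar>x - y\<bar>" by (rule min_lip)
    finally show ?thesis by simp
  qed
  then show "\<exists>L\<ge>0. \<forall>x y. \<bar>clamp K x - clamp K y\<bar> \<le> L * \<bar>x - y\<bar>" by (intro exI[of _ 1]) auto
qed

lemma one_minus_chi:
  assumes K: "K > 0" shows "1 - chi K x \<le> x^2 / K^2"
proof (cases "\<bar>x\<bar> \<le> K")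
  case True
  then show ?thesis by (simp add: chi_one)
next
  case False
  then have "K^2 \<le> x^2" using K by (simp add: abs_le_square_iff[symmetric])
  then have "1 \<le> x^2 / K^2" using K by simp
  then show ?thesis using chi_ge0[of K x] by linarith
qed

lemma integrable_N_bdd:
  fixes g :: "real \<Rightarrow> real"
  assumes "continuous_on UNIV g" "\<And>x. \<bar>g x\<bar> \<le> B"
  shows "integrable std_normal_distribution g"
  by (rule N2.M1.integrable_const_bound[where B=B]) (use assms in \<open>auto intro: borel_measurable_continuous_onI\<close>)

lemma cont_chi: "continuous_on UNIV (chi K)"
  by (rule BL_cont[OF BL_chi])

lemma int_N_chi:
  assumes K: "K > 0"
  shows "integral\<^sup>L std_normal_distribution (\<lambda>x. 1 - chi K x) \<le> 1 / K^2"
proof -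
  interpret real_distribution std_normal_distribution by (rule real_dist_normal_dist)
  have m2: "integral\<^sup>L std_normal_distribution (\<lambda>x. x^2) = 1" "integrable std_normal_distribution (\<lambda>x. x^2)"
    using std_normal_distribution_even_moments[of 1] by simp_all
  have "integral\<^sup>L std_normal_distribution (\<lambda>x. 1 - chi K x) \<le> integral\<^sup>L std_normal_distribution (\<lambda>x. x^2 / K^2)"
  proof (rule integral_mono)
    show "integrable std_normal_distribution (\<lambda>x. 1 - chi K x)"
    proof (rule integrable_N_bdd[where B=1])
      show "continuous_on UNIV (\<lambda>x. 1 - chi K x)" by (intro continuous_intros cont_chi)
      fix x show "\<bar>1 - chi K x\<bar> \<le> 1" using chi_ge0[of K x] chi_le1[of K x] by (simp add: abs_le_iff)
    qed
    show "integrable std_normal_distribution (\<lambda>x. x^2 / K^2)" using m2 by simp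
  qed (rule one_minus_chi[OF K])
  also have "\<dots> = 1 / K^2" using m2 by simp
  finally show ?thesis .
qed

lemma SW:
  fixes f :: "real \<times> real \<Rightarrow> real"
  assumes K: "K \<ge> 0" and f: "continuous_on UNIV f" and e: "e > 0"
  shows "\<exists>F\<in>Rset. \<forall>z\<in>{-K..K} \<times> {-K..K}. \<bar>f z - F z\<bar> < e"
proof -
  let ?S = "{-K..K} \<times> {-K..K}"
  interpret function_ring_on Rset ?S
  proof
    show "compact ?S" by (intro compact_Times compact_Icc)
  next
    fix F assume "F \<in> Rset" then show "continuous_on ?S F"
      by (rule continuous_on_subset[OF Rset_cont]) auto
  next
    fix F G assume "F \<in> Rset" "G \<in> Rset"
    show "(\<lambda>x. F x + G x) \<in> Rset" by (rule Rset_add) fact+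
    show "(\<lambda>x. F x * G x) \<in> Rset" by (rule Rset_mult) fact+
  next
    fix c show "(\<lambda>_. c) \<in> Rset" by (rule Rset_const)
  next
    fix x y assume xy: "x \<in> ?S" "y \<in> ?S" "x \<noteq> y"
    have c1: "(\<lambda>z. clamp K (fst z) * (\<lambda>_. 1) (snd z)) \<in> Rset" by (rule Rset_prod[OF BL_clamp[OF K] BL_const])
    have c2: "(\<lambda>z. (\<lambda>_. 1) (fst z) * clamp K (snd z)) \<in> Rset" by (rule Rset_prod[OF BL_const BL_clamp[OF K]])
    have cl: "clamp K t = t" if "t \<in> {-K..K}" for t using that by (auto simp: clamp_def)
    show "\<exists>F\<in>Rset. F x \<noteq> F y"
    proof (cases "fst x = fst y")
      case True
      then have "snd x \<noteq> snd y" using xy(3) by (simp add: prod_eq_iff)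
      moreover have "clamp K (snd x) = snd x" "clamp K (snd y) = snd y" using xy(1,2) cl by (auto simp: mem_Times_iff)
      ultimately show ?thesis by (intro bexI[OF _ c2]) simp
    next
      case False
      moreover have "clamp K (fst x) = fst x" "clamp K (fst y) = fst y" using xy(1,2) cl by (auto simp: mem_Times_iff)
      ultimately show ?thesis by (intro bexI[OF _ c1]) simp
    qed
  qed
  obtain F where F: "F \<in> UNIV \<rightarrow> Rset" "uniform_limit ?S F f sequentially"
    using Stone_Weierstrass[OF continuous_on_subset[OF f]] by blast
  have "\<forall>\<^sub>F n in sequentially. \<forall>z\<in>?S. dist (F n z) (f z) < e" by (rule uniform_limitD[OF F(2) e])
  then obtain N where N: "\<And>n. n \<ge> N \<Longrightarrow> \<forall>z\<in>?S. dist (F n z) (f z) < e"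
    unfolding eventually_sequentially by blast
  obtain n where "\<forall>z\<in>?S. dist (F n z) (f z) < e" using N[of N] by blast
  then show ?thesis using F(1) by (intro bexI[of _ "F n"]) (auto simp: dist_real_def abs_minus_commute)
qed


lemma tendsto_eps:
  fixes a :: "nat \<Rightarrow> real"
  assumes C: "C > 0" and ev: "\<And>e. e > 0 \<Longrightarrow> eventually (\<lambda>d. \<bar>a d - A\<bar> \<le> C * e) sequentially"
  shows "a \<longlonglongrightarrow> A"
proof (rule tendstoI)
  fix e :: real assume e: "e > 0"
  have "eventually (\<lambda>d. \<bar>a d - A\<bar> \<le> C * (e / (2 * C))) sequentially"
    using C e by (intro ev) auto
  then show "eventually (\<lambda>d. dist (a d) A < e) sequentially"
    by eventually_elim (use C e in \<open>auto simp: dist_real_def\<close>)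
qed

lemma one_minus_prod_le:
  fixes a b :: real
  assumes "0 \<le> a" "a \<le> 1" "0 \<le> b" "b \<le> 1"
  shows "1 - a * b \<le> (1 - a) + (1 - b)"
proof -
  have "0 \<le> (1 - a) * (1 - b)" using assms by simp
  then show ?thesis by (simp add: algebra_simps)
qed

theorem lemma3p1:
  fixes p :: real
  assumes "0 < p" and "p < 1"
  shows "conv_distr2
     (\<lambda>d. measure_pmf (map_pmf
        (\<lambda>\<omega>. ((Phi d (even_vertices d) \<omega> - mu_p p d) / sigma_p p d,
               (Phi d (odd_vertices d) \<omega> - mu_p p d) / sigma_p p d))
        (Qdp d p)))
     std_normal2"
  unfolding conv_distr2_def
proof (intro allI impI)
  note p = assms
  fix f :: "real \<times> real \<Rightarrow> real"
  assume f: "continuous_on UNIV f \<and> bounded (range f)"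
  then obtain B where B: "B > 0" "\<And>z. \<bar>f z\<bar> \<le> B"
    unfolding bounded_pos by auto
  define XE where "XE d \<omega> = XW d p (even_vertices d) \<omega>" for d \<omega>
  define XO where "XO d \<omega> = XW d p (odd_vertices d) \<omega>" for d \<omega>
  have Ieq: "integral\<^sup>L (measure_pmf (map_pmf
        (\<lambda>\<omega>. ((Phi d (even_vertices d) \<omega> - mu_p p d) / sigma_p p d,
               (Phi d (odd_vertices d) \<omega> - mu_p p d) / sigma_p p d))
        (Qdp d p))) f = measure_pmf.expectation (Qdp d p) (\<lambda>\<omega>. f (XE d \<omega>, XO d \<omega>))" for d
    unfolding integral_map_pmf XE_def XO_def XW_def
    by (simp add: Phi_eq[OF even_vertices_sub] Phi_eq[OF odd_vertices_sub])
  let ?A = "integral\<^sup>L std_normal2 f"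
  have fI: "integrable std_normal2 f" using f B(2) by (intro int2) auto
  have "(\<lambda>d. measure_pmf.expectation (Qdp d p) (\<lambda>\<omega>. f (XE d \<omega>, XO d \<omega>))) \<longlonglongrightarrow> ?A"
  proof (rule tendsto_eps[of "3 + 6 * B"])
    show "0 < 3 + 6 * B" using B by simp
  next
    fix e :: real assume e: "e > 0"
    define K where "K = sqrt (1 / e)"
    have K: "K > 0" using e by (simp add: K_def)
    have K2: "1 / K^2 = e" using e by (simp add: K_def)
    define ch where "ch = chi K"
    have ch01: "0 \<le> ch x" "ch x \<le> 1" for x by (auto simp: ch_def chi_ge0 chi_le1)
    have BLch: "BL ch" unfolding ch_def by (rule BL_chi)
    have cch: "continuous_on UNIV ch" by (rule BL_cont[OF BLch])
    have c1ch: "continuous_on UNIV (\<lambda>x. 1 - ch x)" by (intro continuous_intros cch)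
    have b1ch: "\<bar>1 - ch x\<bar> \<le> 1" for x using ch01[of x] by (simp add: abs_le_iff)
    have Nch: "integral\<^sup>L std_normal_distribution (\<lambda>x. 1 - ch x) \<le> e"
      using int_N_chi[OF K] K2 by (simp add: ch_def)
    have \<Psi>R: "(\<lambda>z. ch (fst z) * ch (snd z)) \<in> Rset" by (rule Rset_prod[OF BLch BLch])
    obtain F where FR: "F \<in> Rset" and Fapp: "\<forall>z\<in>{-(K+1)..K+1} \<times> {-(K+1)..K+1}. \<bar>f z - F z\<bar> < e"
      using SW[of "K + 1" f e] K f e by auto
    define G where "G z = F z * (ch (fst z) * ch (snd z))" for z
    have GR: "G \<in> Rset" unfolding G_def by (rule Rset_mult[OF FR \<Psi>R])
    have pw: "\<bar>f z - G z\<bar> \<le> e + B * ((1 - ch (fst z)) + (1 - ch (snd z)))" for z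
    proof -
      let ?\<Psi> = "ch (fst z) * ch (snd z)"
      have \<Psi>01: "0 \<le> ?\<Psi>" "?\<Psi> \<le> 1" using ch01 by (auto intro: mult_le_one)
      have "f z - G z = (f z - F z) * ?\<Psi> + f z * (1 - ?\<Psi>)" unfolding G_def by (simp add: algebra_simps)
      then have "\<bar>f z - G z\<bar> \<le> \<bar>(f z - F z) * ?\<Psi>\<bar> + \<bar>f z * (1 - ?\<Psi>)\<bar>" by (simp add: abs_triangle_ineq)
      also have "\<bar>(f z - F z) * ?\<Psi>\<bar> \<le> e"
      proof (cases "z \<in> {-(K+1)..K+1} \<times> {-(K+1)..K+1}")
        case True
        then have "\<bar>f z - F z\<bar> < e" using Fapp by blast
        then have "\<bar>f z - F z\<bar> \<le> e" by simp
        moreover have "\<bar>?\<Psi>\<bar> \<le> 1" using \<Psi>01 by simp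
        ultimately have "\<bar>f z - F z\<bar> * \<bar>?\<Psi>\<bar> \<le> e * 1" using e by (intro mult_mono) auto
        then show ?thesis by (simp add: abs_mult)
      next
        case False
        then have "\<bar>fst z\<bar> \<ge> K + 1 \<or> \<bar>snd z\<bar> \<ge> K + 1" by (auto simp: mem_Times_iff abs_le_iff)
        then have "ch (fst z) = 0 \<or> ch (snd z) = 0" by (auto simp: ch_def chi_zero)
        then have "?\<Psi> = 0" by auto
        then show ?thesis using e by (metis abs_zero less_imp_le mult_zero_right)
      qed
      also have "\<bar>f z * (1 - ?\<Psi>)\<bar> \<le> B * ((1 - ch (fst z)) + (1 - ch (snd z)))"
      proof -
        have "\<bar>f z * (1 - ?\<Psi>)\<bar> = \<bar>f z\<bar> * (1 - ?\<Psi>)" using \<Psi>01 by (simp add: abs_mult)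
        also have "\<dots> \<le> B * (1 - ?\<Psi>)" using B(2)[of z] \<Psi>01 by (intro mult_right_mono) auto
        also have "\<dots> \<le> B * ((1 - ch (fst z)) + (1 - ch (snd z)))"
          using B(1) one_minus_prod_le[OF ch01(1,2) ch01(1,2)] by (intro mult_left_mono) auto
        finally show ?thesis .
      qed
      finally show ?thesis by simp
    qed
    have GI: "integrable std_normal2 G" by (rule Rconv(1)[OF p GR])
    have i1: "integral\<^sup>L std_normal2 (\<lambda>z. 1 - ch (fst z)) = integral\<^sup>L std_normal_distribution (\<lambda>x. 1 - ch x)"
      using int2_prod[OF c1ch b1ch, of "\<lambda>_. 1" 1] N2.M1.prob_space by simp
    have i2: "integral\<^sup>L std_normal2 (\<lambda>z. 1 - ch (snd z)) = integral\<^sup>L std_normal_distribution (\<lambda>x. 1 - ch x)"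
      using int2_prod[OF _ _ c1ch b1ch, of "\<lambda>_. 1" 1] N2.M1.prob_space by simp
    have cfst: "continuous_on UNIV (\<lambda>z::real\<times>real. 1 - ch (fst z))"
      by (rule continuous_on_compose2[OF c1ch continuous_on_fst[OF continuous_on_id]]) auto
    have csnd: "continuous_on UNIV (\<lambda>z::real\<times>real. 1 - ch (snd z))"
      by (rule continuous_on_compose2[OF c1ch continuous_on_snd[OF continuous_on_id]]) auto
    have I1: "integrable std_normal2 (\<lambda>z. 1 - ch (fst z))" by (rule int2[OF cfst b1ch])
    have I2: "integrable std_normal2 (\<lambda>z. 1 - ch (snd z))" by (rule int2[OF csnd b1ch])
    have LA: "\<bar>?A - integral\<^sup>L std_normal2 G\<bar> \<le> e + B * (e + e)"
    proof -
      have "\<bar>?A - integral\<^sup>L std_normal2 G\<bar> \<le> e + B * (integral\<^sup>L std_normal2 (\<lambda>z. 1 - ch (fst z)) + integral\<^sup>L std_normal2 (\<lambda>z. 1 - ch (snd z)))"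
        by (rule approx_bound[OF std2_prob fI GI I1 I2 pw])
      also have "\<dots> \<le> e + B * (e + e)" unfolding i1 i2 using Nch B(1) by (intro add_left_mono mult_left_mono add_mono) auto
      finally show ?thesis .
    qed
    have FA: "\<bar>measure_pmf.expectation (Qdp d p) (\<lambda>\<omega>. f (XE d \<omega>, XO d \<omega>))
        - measure_pmf.expectation (Qdp d p) (\<lambda>\<omega>. G (XE d \<omega>, XO d \<omega>))\<bar>
      \<le> e + B * (measure_pmf.expectation (Qdp d p) (\<lambda>\<omega>. 1 - ch (XE d \<omega>)) + measure_pmf.expectation (Qdp d p) (\<lambda>\<omega>. 1 - ch (XO d \<omega>)))" for d
    proof -
      have pw': "\<bar>f (XE d \<omega>, XO d \<omega>) - G (XE d \<omega>, XO d \<omega>)\<bar> \<le> e + B * ((1 - ch (XE d \<omega>)) + (1 - ch (XO d \<omega>)))" for \<omega>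
        using pw[of "(XE d \<omega>, XO d \<omega>)"] by simp
      show ?thesis
        by (rule approx_bound[OF measure_pmf.prob_space_axioms _ _ _ _ pw']) (use qdp_fin[of d p] in simp_all)
    qed
    have ev1: "eventually (\<lambda>d. measure_pmf.expectation (Qdp d p) (\<lambda>\<omega>. 1 - ch (XE d \<omega>)) < 2 * e) sequentially"
    proof (rule order_tendstoD(2))
      show "(\<lambda>d. measure_pmf.expectation (Qdp d p) (\<lambda>\<omega>. 1 - ch (XE d \<omega>))) \<longlonglongrightarrow> integral\<^sup>L std_normal_distribution (\<lambda>x. 1 - ch x)"
        unfolding XE_def by (rule clt_bdd[OF p samepar_even even_vertices_sub card_even_odd(1) c1ch b1ch])
      show "integral\<^sup>L std_normal_distribution (\<lambda>x. 1 - ch x) < 2 * e" using Nch e by simp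
    qed
    have ev2: "eventually (\<lambda>d. measure_pmf.expectation (Qdp d p) (\<lambda>\<omega>. 1 - ch (XO d \<omega>)) < 2 * e) sequentially"
    proof (rule order_tendstoD(2))
      show "(\<lambda>d. measure_pmf.expectation (Qdp d p) (\<lambda>\<omega>. 1 - ch (XO d \<omega>))) \<longlonglongrightarrow> integral\<^sup>L std_normal_distribution (\<lambda>x. 1 - ch x)"
        unfolding XO_def by (rule clt_bdd[OF p samepar_odd odd_vertices_sub card_even_odd(2) c1ch b1ch])
      show "integral\<^sup>L std_normal_distribution (\<lambda>x. 1 - ch x) < 2 * e" using Nch e by simp
    qed
    have ev3: "eventually (\<lambda>d. dist (measure_pmf.expectation (Qdp d p) (\<lambda>\<omega>. G (XE d \<omega>, XO d \<omega>))) (integral\<^sup>L std_normal2 G) < e) sequentially"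
      using Rconv(2)[OF p GR] e unfolding XE_def XO_def by (rule tendstoD)
    show "eventually (\<lambda>d. \<bar>measure_pmf.expectation (Qdp d p) (\<lambda>\<omega>. f (XE d \<omega>, XO d \<omega>)) - ?A\<bar> \<le> (3 + 6 * B) * e) sequentially"
      using ev1 ev2 ev3
    proof eventually_elim
      case (elim d)
      let ?Ef = "measure_pmf.expectation (Qdp d p) (\<lambda>\<omega>. f (XE d \<omega>, XO d \<omega>))"
      let ?EG = "measure_pmf.expectation (Qdp d p) (\<lambda>\<omega>. G (XE d \<omega>, XO d \<omega>))"
      have "\<bar>?Ef - ?EG\<bar> \<le> e + B * (2 * e + 2 * e)"
        using FA[of d] elim(1,2) B(1) by (smt (verit) mult_left_mono)
      moreover have "\<bar>?EG - integral\<^sup>L std_normal2 G\<bar> < e" using elim(3) by (simp add: dist_real_def)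
      ultimately have "\<bar>?Ef - ?A\<bar> \<le> (e + B * (2 * e + 2 * e)) + e + (e + B * (e + e))"
        using LA by linarith
      then show ?case by (simp add: algebra_simps)
    qed
  qed
  then show "(\<lambda>d. integral\<^sup>L (measure_pmf (map_pmf
        (\<lambda>\<omega>. ((Phi d (even_vertices d) \<omega> - mu_p p d) / sigma_p p d,
               (Phi d (odd_vertices d) \<omega> - mu_p p d) / sigma_p p d))
        (Qdp d p))) f) \<longlonglongrightarrow> ?A"
    unfolding Ieq .
qed


end
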